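(* Let $A=kQ/I$ be a toupie algebra over a field $k$ of characteristic zero. If $a>0$, the classes of the elements $y_i$ (for the branches $\alpha^{(i)}$ containing monomial relations), $w_{pq}$ ($p\ne q$, $1\le p,q\le a$), $z_{us}$ ($1\le u\le a$, $\alpha^{(s)}\in{}_0\mathcal{B}_\omega\setminus Z$), $x_j$ ($2\le j\le a$) and $t_k$ ($1\le k\le r$) form a basis of $\mathrm{HH}^1(A)=\ker D_1/\operatorname{Im}D_0$. If $a=0$, let $\alpha^{(B)}$ be the last branch in the numbering; then the classes of all the elements $y_i$ and $t_k$ except the unique one among them having $\alpha^B_0\|\alpha^B_0$ as a summand form a basis of $\mathrm{HH}^1(A)$.
   Context: A finite quiver $Q$ is a toupie quiver if it has a unique source $0$, a unique sink $\omega$, and every other vertex is the source of exactly one arrow and the target of exactly one arrow. Paths are composed left to right. A branch is a path from $0$ to $\omega$; the arrows of a branch $\alpha^{(i)}$ are $\alpha^i_0,\alpha^i_1,\dots$ in order, $\alpha^i_0$ starting at $0$. A toupie algebra is $A=kQ/I$ with $Q$ toupie and $I$ an admissible ideal generated by monomial relations (paths inside one branch) and non-monomial relations (linear combinations of branches). Branches are numbered: $Z=\{\alpha^{(1)},\dots,\alpha^{(a)}\}$ the arrows from $0$ to $\omega$; then the $l$ branches of length $\ge2$ in no relation; then the $m$ branches containing monomial relations; then the $n$ branches involved in non-monomial relations. The non-monomial relations have coefficient matrix in reduced row echelon form, $\rho_i=\alpha^{(k_i)}+\sum_{j>k_i}b_{ij}\alpha^{(j)}$; $R$ is a minimal generating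 set of $I$ formed by these $\rho_i$ and monomial relations. $E=kQ_0$, $e_x$ trivial path at $x$, $D=\dim e_0Ae_\omega$, ${}_0\mathcal{B}_\omega$ the set of classes of branches containing no monomial relation and different from all $\alpha^{(k_i)}$. $Q_\rho$ is the graph whose vertices are branches of length $\ge2$ containing no monomial relation, with an edge between two of them if some $\rho_i$ involves both; $Q_\rho^1,\dots,Q_\rho^r$ are its connected components. For an arrow $\gamma$ and $h\in e_{s(\gamma)}Ae_{t(\gamma)}$, $\gamma\|h$ is the $E$-bimodule map $kQ_1\to A$ sending $\gamma$ to $h$, other arrows to $0$. $D_0:\mathrm{Hom}_{E^e}(E,A)\to\mathrm{Hom}_{E^e}(kQ_1,A)$, $D_0(e_x\|e_x)=\sum_{t(\gamma)=x}\gamma\|\gamma-\sum_{s(\gamma)=x}\gamma\|\gamma$; $D_1:\mathrm{Hom}_{E^e}(kQ_1,A)\to\mathrm{Hom}_{E^e}(kR,A)$, $D_1(f)(r)=\sum r^{(1)}f(r^{(2)})r^{(3)}$ (sum over factorizations of the paths of $r$ with $r^{(2)}$ an arrow, extended linearly). Elements: $y_i=\alpha^i_0\|\alpha^i_0$; $w_{pq}=\alpha^{(p)}\|\alpha^{(q)}$; $z_{us}=\alpha^{(u)}\|\alpha^{(s)}$; $x_j=\alpha^{(j)}\|\alpha^{(j)}-\alpha^{(1)}\|\alpha^{(1)}$; $t_k=\sum_{\alpha^{(i)}\in Q_\rho^k}\alpha^i_0\|\alpha^i_0$. *)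

theory Defs
  imports Main
begin

text \<open>A toupie quiver is encoded by the list ls of branch lengths: branch i
(0-indexed, i < length ls) is a path of length ls!i >= 1 from the source Src
to the sink Snk.  Its arrows are (i,j), j < ls!i, the arrow (i,j) being the
j-th arrow alpha^i_j of the branch.\<close>

datatype vert = Src | Snk | Mid nat nat

text \<open>Paths: trivial paths Triv x, and Pth i j l = alpha^i_j ... alpha^i_(l-1)
(arrows j..l-1 of branch i, j < l).\<close>
datatype path = Triv vert | Pth nat nat nat

type_synonym 'k kq = "path \<Rightarrow> 'k"            \<comment> \<open>elements of kQ, coefficients on paths\<close>
type_synonym 'k hom1 = "nat \<times> nat \<Rightarrow> path \<Rightarrow> 'k"  \<comment> \<open>maps kQ_1 -> kQ, arrow-wise\<close>

definition vtx :: "nat list \<Rightarrow> nat \<Rightarrow> nat \<Rightarrow> vert" where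
  "vtx ls i j = (if j = 0 then Src else if j = ls ! i then Snk else Mid i j)"

definition verts :: "nat list \<Rightarrow> vert set" where
  "verts ls = {Src, Snk} \<union> {Mid i j | i j. i < length ls \<and> 0 < j \<and> j < ls ! i}"

definition arrows :: "nat list \<Rightarrow> (nat \<times> nat) set" where
  "arrows ls = {(i, j). i < length ls \<and> j < ls ! i}"

fun asrc :: "nat list \<Rightarrow> nat \<times> nat \<Rightarrow> vert" where
  "asrc ls (i, j) = vtx ls i j"

fun atgt :: "nat list \<Rightarrow> nat \<times> nat \<Rightarrow> vert" where
  "atgt ls (i, j) = vtx ls i (Suc j)"

fun arrp :: "nat \<times> nat \<Rightarrow> path" where
  "arrp (i, j) = Pth i j (Suc j)"

definition paths :: "nat list \<Rightarrow> path set" where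
  "paths ls = Triv ` verts ls \<union> {Pth i j l | i j l. i < length ls \<and> j < l \<and> l \<le> ls ! i}"

fun psrc :: "nat list \<Rightarrow> path \<Rightarrow> vert" where
  "psrc ls (Triv x) = x"
| "psrc ls (Pth i j l) = vtx ls i j"

fun ptgt :: "nat list \<Rightarrow> path \<Rightarrow> vert" where
  "ptgt ls (Triv x) = x"
| "ptgt ls (Pth i j l) = vtx ls i l"

text \<open>Concatenation of paths (left to right composition).\<close>
fun pcat :: "nat list \<Rightarrow> path \<Rightarrow> path \<Rightarrow> path option" where
  "pcat ls (Triv x) q = (if psrc ls q = x then Some q else None)"
| "pcat ls (Pth i j l) (Triv y) = (if vtx ls i l = y then Some (Pth i j l) else None)"
| "pcat ls (Pth i j l) (Pth i' j' l') = (if i = i' \<and> l = j' then Some (Pth i j l') else None)"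

definition delta :: "path \<Rightarrow> 'k::field kq" where
  "delta p = (\<lambda>q. if q = p then 1 else 0)"

definition mul :: "nat list \<Rightarrow> 'k::field kq \<Rightarrow> 'k kq \<Rightarrow> 'k kq" where
  "mul ls u v = (\<lambda>p. \<Sum>qq \<in> {(q1, q2). q1 \<in> paths ls \<and> q2 \<in> paths ls \<and> pcat ls q1 q2 = Some p}.
                        u (fst qq) * v (snd qq))"

definition in_eAe :: "nat list \<Rightarrow> vert \<Rightarrow> vert \<Rightarrow> 'k::field kq \<Rightarrow> bool" where
  "in_eAe ls x y u = (\<forall>p. u p \<noteq> 0 \<longrightarrow> p \<in> paths ls \<and> psrc ls p = x \<and> ptgt ls p = y)"

definition inI :: "nat list \<Rightarrow> 'k::field kq set \<Rightarrow> 'k kq \<Rightarrow> bool" where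
  "inI ls R u = (\<exists>c. u = (\<lambda>q. \<Sum>t \<in> paths ls \<times> R \<times> paths ls.
        c t * mul ls (mul ls (delta (fst t)) (fst (snd t))) (delta (snd (snd t))) q))"

text \<open>Hom_{E^e}(kQ_1, A), with values represented in kQ (modulo I).\<close>
definition hom1 :: "nat list \<Rightarrow> 'k::field hom1 \<Rightarrow> bool" where
  "hom1 ls f = (\<forall>\<gamma>. (\<gamma> \<in> arrows ls \<longrightarrow> in_eAe ls (asrc ls \<gamma>) (atgt ls \<gamma>) (f \<gamma>))
                   \<and> (\<gamma> \<notin> arrows ls \<longrightarrow> f \<gamma> = (\<lambda>_. 0)))"

definition hom0 :: "nat list \<Rightarrow> (vert \<Rightarrow> 'k::field kq) \<Rightarrow> bool" where
  "hom0 ls g = (\<forall>x. (x \<in> verts ls \<longrightarrow> in_eAe ls x x (g x)) \<and> (x \<notin> verts ls \<longrightarrow> g x = (\<lambda>_. 0)))"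

text \<open>D_0, the linear extension of
  D_0(e_x||e_x) = sum_{t(gamma)=x} gamma||gamma - sum_{s(gamma)=x} gamma||gamma.\<close>
definition D0 :: "nat list \<Rightarrow> (vert \<Rightarrow> 'k::field kq) \<Rightarrow> 'k hom1" where
  "D0 ls g = (\<lambda>\<gamma>. if \<gamma> \<in> arrows ls
      then (\<lambda>p. mul ls (delta (arrp \<gamma>)) (g (atgt ls \<gamma>)) p - mul ls (g (asrc ls \<gamma>)) (delta (arrp \<gamma>)) p)
      else (\<lambda>_. 0))"

definition sp :: "nat list \<Rightarrow> nat \<Rightarrow> nat \<Rightarrow> nat \<Rightarrow> path" where
  "sp ls i j h = (if j = h then Triv (vtx ls i j) else Pth i j h)"

fun D1p :: "nat list \<Rightarrow> 'k::field hom1 \<Rightarrow> path \<Rightarrow> 'k kq" where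
  "D1p ls f (Triv x) = (\<lambda>_. 0)"
| "D1p ls f (Pth i j l) = (\<lambda>q. \<Sum>h \<in> {j..<l}.
      mul ls (mul ls (delta (sp ls i j h)) (f (i, h))) (delta (sp ls i (Suc h) l)) q)"

text \<open>D_1(f)(r) = sum r^(1) f(r^(2)) r^(3), extended linearly.\<close>
definition D1 :: "nat list \<Rightarrow> 'k::field hom1 \<Rightarrow> 'k kq \<Rightarrow> 'k kq" where
  "D1 ls f r = (\<lambda>q. \<Sum>p \<in> paths ls. r p * D1p ls f p q)"

definition kerD1 :: "nat list \<Rightarrow> 'k::field kq set \<Rightarrow> 'k hom1 \<Rightarrow> bool" where
  "kerD1 ls R f = (hom1 ls f \<and> (\<forall>r \<in> R. inI ls R (D1 ls f r)))"

text \<open>Equality in Hom_{E^e}(kQ_1, A) = Hom_{E^e}(kQ_1, kQ/I).\<close>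
definition equivA :: "nat list \<Rightarrow> 'k::field kq set \<Rightarrow> 'k hom1 \<Rightarrow> 'k hom1 \<Rightarrow> bool" where
  "equivA ls R f g = (\<forall>\<gamma> \<in> arrows ls. inI ls R (\<lambda>p. f \<gamma> p - g \<gamma> p))"

definition lincomb :: "'i set \<Rightarrow> ('i \<Rightarrow> 'k::field) \<Rightarrow> ('i \<Rightarrow> 'k hom1) \<Rightarrow> 'k hom1" where
  "lincomb S c v = (\<lambda>\<gamma> p. \<Sum>j \<in> S. c j * v j \<gamma> p)"

definition classes_basis :: "nat list \<Rightarrow> 'k::field kq set \<Rightarrow> 'i set \<Rightarrow> ('i \<Rightarrow> 'k hom1) \<Rightarrow> bool" where
  "classes_basis ls R S v =
     (finite S \<and> (\<forall>j \<in> S. kerD1 ls R (v j))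
      \<and> (\<forall>c g. hom0 ls g \<and> equivA ls R (lincomb S c v) (D0 ls g) \<longrightarrow> (\<forall>j \<in> S. c j = 0))
      \<and> (\<forall>f. kerD1 ls R f \<longrightarrow>
             (\<exists>c g. hom0 ls g \<and> equivA ls R f (\<lambda>\<gamma> p. lincomb S c v \<gamma> p + D0 ls g \<gamma> p))))"

text \<open>Monomial relations: Mon is a set of triples (i,j,l) standing for Pth i j l.
Non-monomial relations rho_s (s < nr): rho_s = sum_i b s i * (branch i).\<close>

definition has_mon :: "(nat \<times> nat \<times> nat) set \<Rightarrow> nat \<Rightarrow> bool" where
  "has_mon Mon i = (\<exists>j l. (i, j, l) \<in> Mon)"

definition branch :: "nat list \<Rightarrow> nat \<Rightarrow> 'k::field kq" where
  "branch ls i = delta (Pth i 0 (ls ! i))"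

definition rho :: "nat list \<Rightarrow> (nat \<Rightarrow> nat \<Rightarrow> 'k::field) \<Rightarrow> nat \<Rightarrow> 'k kq" where
  "rho ls b s = (\<lambda>q. \<Sum>i < length ls. b s i * branch ls i q)"

definition rels :: "nat list \<Rightarrow> (nat \<times> nat \<times> nat) set \<Rightarrow> nat \<Rightarrow> (nat \<Rightarrow> nat \<Rightarrow> 'k::field) \<Rightarrow> 'k kq set" where
  "rels ls Mon nr b = (\<lambda>(i, j, l). delta (Pth i j l)) ` Mon \<union> rho ls b ` {..<nr}"

text \<open>The standing conventions: branches 0..a-1 are the arrows 0 -> omega,
a..a+l-1 the branches of length >= 2 in no relation, a+l..a+l+m-1 those
containing monomial relations, a+l+m..a+l+m+n-1 those involved in
non-monomial relations; the coefficient matrix b is in reduced row echelon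
form with pivot columns kp s; the relations form a minimal generating set.\<close>
definition toupie_pres :: "nat list \<Rightarrow> (nat \<times> nat \<times> nat) set \<Rightarrow> nat \<Rightarrow> (nat \<Rightarrow> nat \<Rightarrow> 'k::field)
     \<Rightarrow> (nat \<Rightarrow> nat) \<Rightarrow> nat \<Rightarrow> nat \<Rightarrow> nat \<Rightarrow> nat \<Rightarrow> bool" where
  "toupie_pres ls Mon nr b kp a l m n =
    (a + l + m + n = length ls \<and> 0 < length ls
     \<and> (\<forall>i < a. ls ! i = 1)
     \<and> (\<forall>i. a \<le> i \<and> i < length ls \<longrightarrow> 2 \<le> ls ! i)
     \<and> (\<forall>i j l'. (i, j, l') \<in> Mon \<longrightarrow> a + l \<le> i \<and> i < a + l + m \<and> j + 2 \<le> l' \<and> l' \<le> ls ! i)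
     \<and> (\<forall>i. a + l \<le> i \<and> i < a + l + m \<longrightarrow> has_mon Mon i)
     \<and> (\<forall>s < nr. \<forall>i. i < a + l + m \<or> length ls \<le> i \<longrightarrow> b s i = 0)
     \<and> (\<forall>i. a + l + m \<le> i \<and> i < length ls \<longrightarrow> (\<exists>s < nr. b s i \<noteq> 0))
     \<and> (\<forall>s < nr. \<exists>i. i \<noteq> kp s \<and> b s i \<noteq> 0)
     \<and> (\<forall>s < nr. b s (kp s) = 1 \<and> (\<forall>i < kp s. b s i = 0))
     \<and> (\<forall>s s'. s < s' \<and> s' < nr \<longrightarrow> kp s < kp s')
     \<and> (\<forall>s < nr. \<forall>s' < nr. s' \<noteq> s \<longrightarrow> b s' (kp s) = 0)
     \<and> (\<forall>R'. R' \<subset> rels ls Mon nr b \<longrightarrow> (\<exists>u. inI ls (rels ls Mon nr b) u \<and> \<not> inI ls R' u)))"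

datatype idx = Yi nat | Wi nat nat | Zi nat nat | Xi nat | Ti "nat set"

definition single :: "nat \<times> nat \<Rightarrow> 'k::field kq \<Rightarrow> 'k hom1" where
  "single \<gamma> h = (\<lambda>\<gamma>'. if \<gamma>' = \<gamma> then h else (\<lambda>_. 0))"

fun elem :: "nat list \<Rightarrow> idx \<Rightarrow> 'k::field hom1" where
  "elem ls (Yi i) = single (i, 0) (delta (arrp (i, 0)))"
| "elem ls (Wi p q) = single (p, 0) (branch ls q)"
| "elem ls (Zi u s) = single (u, 0) (branch ls s)"
| "elem ls (Xi j) = (\<lambda>\<gamma> p. single (j, 0) (branch ls j) \<gamma> p - single (0, 0) (branch ls 0) \<gamma> p)"
| "elem ls (Ti C) = (\<lambda>\<gamma> p. \<Sum>i \<in> C. single (i, 0) (delta (arrp (i, 0))) \<gamma> p)"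

definition Vrho :: "nat list \<Rightarrow> (nat \<times> nat \<times> nat) set \<Rightarrow> nat set" where
  "Vrho ls Mon = {i. i < length ls \<and> 2 \<le> ls ! i \<and> \<not> has_mon Mon i}"

definition Erho :: "nat list \<Rightarrow> (nat \<times> nat \<times> nat) set \<Rightarrow> nat \<Rightarrow> (nat \<Rightarrow> nat \<Rightarrow> 'k::field) \<Rightarrow> (nat \<times> nat) set" where
  "Erho ls Mon nr b = {(i, i'). i \<in> Vrho ls Mon \<and> i' \<in> Vrho ls Mon \<and> (\<exists>s < nr. b s i \<noteq> 0 \<and> b s i' \<noteq> 0)}"

definition comps :: "nat list \<Rightarrow> (nat \<times> nat \<times> nat) set \<Rightarrow> nat \<Rightarrow> (nat \<Rightarrow> nat \<Rightarrow> 'k::field) \<Rightarrow> nat set set" where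
  "comps ls Mon nr b = {(Erho ls Mon nr b)\<^sup>* `` {i} | i. i \<in> Vrho ls Mon}"

definition B0w :: "nat list \<Rightarrow> (nat \<times> nat \<times> nat) set \<Rightarrow> nat \<Rightarrow> (nat \<Rightarrow> nat) \<Rightarrow> nat set" where
  "B0w ls Mon nr kp = {s. s < length ls \<and> \<not> has_mon Mon s \<and> s \<notin> kp ` {..<nr}}"

definition idx_pos :: "nat list \<Rightarrow> (nat \<times> nat \<times> nat) set \<Rightarrow> nat \<Rightarrow> (nat \<Rightarrow> nat \<Rightarrow> 'k::field)
     \<Rightarrow> (nat \<Rightarrow> nat) \<Rightarrow> nat \<Rightarrow> idx set" where
  "idx_pos ls Mon nr b kp a =
     Yi ` {i. i < length ls \<and> has_mon Mon i}
     \<union> {Wi p q | p q. p \<noteq> q \<and> p < a \<and> q < a}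
     \<union> {Zi u s | u s. u < a \<and> s \<in> B0w ls Mon nr kp \<and> a \<le> s}
     \<union> Xi ` {1..<a}
     \<union> Ti ` comps ls Mon nr b"

text \<open>Whether the element contains alpha^B_0||alpha^B_0 (B the last branch) as a summand.\<close>
fun hasB :: "nat list \<Rightarrow> idx \<Rightarrow> bool" where
  "hasB ls (Yi i) = (i = length ls - 1)"
| "hasB ls (Ti C) = (length ls - 1 \<in> C)"
| "hasB ls _ = False"

definition idx_zero :: "nat list \<Rightarrow> (nat \<times> nat \<times> nat) set \<Rightarrow> nat \<Rightarrow> (nat \<Rightarrow> nat \<Rightarrow> 'k::field) \<Rightarrow> idx set" where
  "idx_zero ls Mon nr b =
     {j \<in> Yi ` {i. i < length ls \<and> has_mon Mon i} \<union> Ti ` comps ls Mon nr b. \<not> hasB ls j}"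

end

theory Submission
  imports Defs
begin


lemma finite_verts: "finite (verts ls)"
proof -
  have "{Mid i j | i j. i < length ls \<and> 0 < j \<and> j < ls ! i} \<subseteq> (\<lambda>(i,j). Mid i j) ` (SIGMA i:{..<length ls}. {..<ls!i})"
    by auto
  then show ?thesis unfolding verts_def by (meson finite_Un finite.emptyI finite.insertI finite_SigmaI finite_imageI finite_lessThan finite_subset)
qed

lemma finite_paths: "finite (paths ls)"
proof -
  have "{Pth i j l | i j l. i < length ls \<and> j < l \<and> l \<le> ls ! i} \<subseteq> (\<lambda>(i,j,l). Pth i j l) ` (SIGMA i:{..<length ls}. {..<ls!i} \<times> {..ls!i})"
  proof clarify
    fix i j l assume "i < length ls" "j < l" "l \<le> ls ! i"
    then show "Pth i j l \<in> (\<lambda>(i,j,l). Pth i j l) ` (SIGMA i:{..<length ls}. {..<ls!i} \<times> {..ls!i})"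
      by (intro image_eqI[where x="(i,j,l)"]) auto
  qed
  then show ?thesis unfolding paths_def using finite_verts
    by (meson finite_Un finite_SigmaI finite_cartesian_product finite_atMost finite_imageI finite_lessThan finite_subset)
qed

lemma vtx_in_verts: "i < length ls \<Longrightarrow> j \<le> ls ! i \<Longrightarrow> vtx ls i j \<in> verts ls"
  unfolding vtx_def verts_def by auto

lemma vtx_eq_iff:
  assumes "i < length ls" "j \<le> ls ! i" "k < length ls" "h \<le> ls ! k" "0 < ls ! i" "0 < ls ! k"
  shows "vtx ls i j = vtx ls k h \<longleftrightarrow> (j = 0 \<and> h = 0) \<or> (j = ls!i \<and> h = ls!k) \<or> (i = k \<and> j = h)"
  using assms unfolding vtx_def by auto

lemma Pth_in_paths: "i < length ls \<Longrightarrow> j < l \<Longrightarrow> l \<le> ls ! i \<Longrightarrow> Pth i j l \<in> paths ls"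
  unfolding paths_def by auto

lemma Triv_in_paths: "x \<in> verts ls \<Longrightarrow> Triv x \<in> paths ls"
  unfolding paths_def by auto

lemma Pth_in_pathsD: "Pth i j l \<in> paths ls \<Longrightarrow> i < length ls \<and> j < l \<and> l \<le> ls ! i"
  unfolding paths_def by auto

lemma Triv_in_pathsD: "Triv x \<in> paths ls \<Longrightarrow> x \<in> verts ls"
  unfolding paths_def by auto

lemma delta_apply: "delta p q = (if q = p then 1 else 0)"
  by (simp add: delta_def)

section \<open>Multiplication\<close>

lemma mul_alt:
  "mul ls u v p = (\<Sum>x\<in>paths ls. \<Sum>y\<in>{y\<in>paths ls. pcat ls x y = Some p}. u x * v y)"
proof -
  have eq: "{(q1, q2). q1 \<in> paths ls \<and> q2 \<in> paths ls \<and> pcat ls q1 q2 = Some p}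
      = (SIGMA x:paths ls. {y\<in>paths ls. pcat ls x y = Some p})" by auto
  show ?thesis unfolding mul_def eq
    by (subst sum.Sigma) (auto simp: finite_paths split_def)
qed

lemma mul_delta_left:
  "mul ls (delta q) v p = (if q \<in> paths ls then (\<Sum>y\<in>{y\<in>paths ls. pcat ls q y = Some p}. v y) else 0)"
proof -
  have "mul ls (delta q) v p = (\<Sum>x\<in>paths ls. if x = q then (\<Sum>y\<in>{y\<in>paths ls. pcat ls x y = Some p}. v y) else 0)"
    unfolding mul_alt delta_def by (intro sum.cong) auto
  also have "\<dots> = (if q \<in> paths ls then (\<Sum>y\<in>{y\<in>paths ls. pcat ls q y = Some p}. v y) else 0)"
    by (simp add: sum.delta' finite_paths)
  finally show ?thesis .
qed

lemma mul_delta_right: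
  "mul ls u (delta q) p = (if q \<in> paths ls then (\<Sum>x\<in>{x\<in>paths ls. pcat ls x q = Some p}. u x) else 0)"
proof -
  have "mul ls u (delta q) p = (\<Sum>x\<in>paths ls. if q \<in> paths ls \<and> pcat ls x q = Some p then u x else 0)"
    unfolding mul_alt delta_def
  proof (intro sum.cong refl)
    fix x assume "x \<in> paths ls"
    show "(\<Sum>y\<in>{y \<in> paths ls. pcat ls x y = Some p}. u x * (if y = q then 1 else 0)) =
         (if q \<in> paths ls \<and> pcat ls x q = Some p then u x else 0)"
      by (simp add: sum.delta'[of _ q "\<lambda>_. u x", simplified] finite_paths if_distrib[where f="\<lambda>t. u x * t"] cong: if_cong)
  qed
  also have "\<dots> = (if q \<in> paths ls then (\<Sum>x\<in>{x\<in>paths ls. pcat ls x q = Some p}. u x) else 0)"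
    by (simp add: sum.inter_filter[symmetric] finite_paths)
  finally show ?thesis .
qed


lemma pcat_Triv_left: "pcat ls (Triv x) y = Some p \<longleftrightarrow> psrc ls y = x \<and> p = y"
  by auto

lemma pcat_Triv_right: "pcat ls y (Triv x) = Some p \<longleftrightarrow> ptgt ls y = x \<and> p = y"
  by (cases y) auto

lemma mul_Triv_left:
  assumes "x \<in> verts ls"
  shows "mul ls (delta (Triv x)) v p = (if p \<in> paths ls \<and> psrc ls p = x then v p else 0)"
proof -
  have "{y\<in>paths ls. pcat ls (Triv x) y = Some p} = (if p \<in> paths ls \<and> psrc ls p = x then {p} else {})"
    by (auto simp: pcat_Triv_left)
  then show ?thesis using assms by (simp add: mul_delta_left Triv_in_paths)
qed

lemma mul_Triv_right:
  assumes "x \<in> verts ls"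
  shows "mul ls v (delta (Triv x)) p = (if p \<in> paths ls \<and> ptgt ls p = x then v p else 0)"
proof -
  have "{y\<in>paths ls. pcat ls y (Triv x) = Some p} = (if p \<in> paths ls \<and> ptgt ls p = x then {p} else {})"
    by (auto simp: pcat_Triv_right)
  then show ?thesis using assms by (simp add: mul_delta_right Triv_in_paths)
qed

lemma mul_dd:
  assumes "x \<in> paths ls" "y \<in> paths ls"
  shows "mul ls (delta x) (delta y) p = (if pcat ls x y = Some p then 1 else 0)"
proof -
  have "mul ls (delta x) (delta y) p = (\<Sum>y'\<in>{y'\<in>paths ls. pcat ls x y' = Some p}. if y' = y then 1 else 0)"
    using assms mul_delta_left[of ls x "delta y" p] by (simp add: delta_def)
  also have "\<dots> = (if pcat ls x y = Some p then 1 else 0)"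
    using assms by (simp add: sum.delta finite_paths)
  finally show ?thesis .
qed

lemma mul_dd_Some:
  assumes "x \<in> paths ls" "y \<in> paths ls" "pcat ls x y = Some z"
  shows "mul ls (delta x) (delta y) = delta z"
  using assms by (auto simp: mul_dd delta_apply)

lemma mul_smult_left: "mul ls (\<lambda>q. c * u q) v p = c * mul ls u v p"
  unfolding mul_def by (simp add: sum_distrib_left mult.assoc)

lemma mul_smult_right: "mul ls u (\<lambda>q. c * v q) p = c * mul ls u v p"
  unfolding mul_def by (simp add: sum_distrib_left mult.left_commute)

lemma mul_zero_left: "mul ls (\<lambda>q. 0) v p = 0"
  unfolding mul_def by simp

lemma mul_zero_right: "mul ls u (\<lambda>q. 0) p = 0"
  unfolding mul_def by simp

lemma mul_sum_left: "mul ls (\<lambda>q. \<Sum>j\<in>S. u j q) v p = (\<Sum>j\<in>S. mul ls (u j) v p)"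
  unfolding mul_def by (simp add: sum_distrib_right sum.swap[where A=S])

lemma mul_sum_right: "mul ls u (\<lambda>q. \<Sum>j\<in>S. v j q) p = (\<Sum>j\<in>S. mul ls u (v j) p)"
  unfolding mul_def by (simp add: sum_distrib_left sum.swap[where A=S])

lemma mul_supp:
  assumes "mul ls u v p \<noteq> 0"
  shows "\<exists>x y. x \<in> paths ls \<and> y \<in> paths ls \<and> pcat ls x y = Some p \<and> u x \<noteq> 0 \<and> v y \<noteq> 0"
proof (rule ccontr)
  assume "\<not> ?thesis"
  then have "mul ls u v p = 0" unfolding mul_def by (intro sum.neutral) auto
  with assms show False by simp
qed

fun plen :: "path \<Rightarrow> nat" where
  "plen (Triv x) = 0" | "plen (Pth i j l) = l - j"

lemma plen_pcat:
  assumes "x \<in> paths ls" "y \<in> paths ls" "pcat ls x y = Some p"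
  shows "plen p = plen x + plen y"
  using assms by (cases x; cases y) (auto split: if_splits dest!: Pth_in_pathsD)

lemma pcat_right_Pth:
  assumes "x \<in> paths ls" "pcat ls x (Pth i j l) = Some p"
  shows "\<exists>j0\<le>j. p = Pth i j0 l"
  using assms by (cases x) (auto split: if_splits dest!: Pth_in_pathsD)

lemma pcat_left_Pth:
  assumes "y \<in> paths ls" "pcat ls (Pth i j l) y = Some p"
  shows "\<exists>l0\<ge>l. p = Pth i j l0"
  using assms by (cases y) (auto split: if_splits dest!: Pth_in_pathsD)

lemma pcat_in_paths:
  assumes "x \<in> paths ls" "y \<in> paths ls" "pcat ls x y = Some p"
  shows "p \<in> paths ls"
  using assms by (cases x; cases y) (auto split: if_splits dest!: Pth_in_pathsD intro: Pth_in_paths)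


section \<open>Ideal\<close>

lemma inI_zero: "inI ls R (\<lambda>q. 0)"
  unfolding inI_def by (rule exI[where x="\<lambda>_. 0"]) simp

lemma inI_add:
  assumes "inI ls R u" "inI ls R v" shows "inI ls R (\<lambda>q. u q + v q)"
proof -
  from assms obtain c1 c2 where c1: "u = (\<lambda>q. \<Sum>t \<in> paths ls \<times> R \<times> paths ls.
        c1 t * mul ls (mul ls (delta (fst t)) (fst (snd t))) (delta (snd (snd t))) q)"
    and c2: "v = (\<lambda>q. \<Sum>t \<in> paths ls \<times> R \<times> paths ls.
        c2 t * mul ls (mul ls (delta (fst t)) (fst (snd t))) (delta (snd (snd t))) q)"
    unfolding inI_def by blast
  show ?thesis unfolding inI_def
    by (rule exI[where x="\<lambda>t. c1 t + c2 t"]) (simp add: c1 c2 distrib_right sum.distrib)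
qed

lemma inI_smult:
  assumes "inI ls R u" shows "inI ls R (\<lambda>q. k * u q)"
proof -
  from assms obtain c1 where c1: "u = (\<lambda>q. \<Sum>t \<in> paths ls \<times> R \<times> paths ls.
        c1 t * mul ls (mul ls (delta (fst t)) (fst (snd t))) (delta (snd (snd t))) q)"
    unfolding inI_def by blast
  show ?thesis unfolding inI_def
    by (rule exI[where x="\<lambda>t. k * c1 t"]) (simp add: c1 sum_distrib_left mult.assoc)
qed

lemma inI_diff:
  assumes "inI ls R u" "inI ls R v" shows "inI ls R (\<lambda>q. u q - v q)"
  using inI_add[OF assms(1) inI_smult[OF assms(2), of "-1"]] by simp

lemma inI_sum:
  assumes "finite S" "\<And>j. j \<in> S \<Longrightarrow> inI ls R (u j)" shows "inI ls R (\<lambda>q. \<Sum>j\<in>S. u j q)"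
  using assms
proof (induction S rule: finite_induct)
  case empty then show ?case by (simp add: inI_zero)
next
  case (insert x F)
  then show ?case by (simp add: inI_add)
qed

lemma inI_gen:
  assumes "finite R" "r \<in> R" "q1 \<in> paths ls" "q2 \<in> paths ls"
  shows "inI ls R (mul ls (mul ls (delta q1) r) (delta q2))"
proof -
  let ?T = "\<lambda>t. mul ls (mul ls (delta (fst t)) (fst (snd t))) (delta (snd (snd t)))"
  have fin: "finite (paths ls \<times> R \<times> paths ls)" using assms(1) by (simp add: finite_paths)
  have mem: "(q1, r, q2) \<in> paths ls \<times> R \<times> paths ls" using assms by simp
  have "(\<lambda>q. \<Sum>t \<in> paths ls \<times> R \<times> paths ls. (if t = (q1, r, q2) then 1 else 0) * ?T t q)
       = (\<lambda>q. ?T (q1, r, q2) q)"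
  proof
    fix q
    have "(\<Sum>t \<in> paths ls \<times> R \<times> paths ls. (if t = (q1, r, q2) then 1 else 0) * ?T t q)
        = (\<Sum>t \<in> paths ls \<times> R \<times> paths ls. if t = (q1, r, q2) then ?T t q else 0)"
      by (intro sum.cong) auto
    also have "\<dots> = ?T (q1, r, q2) q"
      using sum.delta[OF fin, of "(q1, r, q2)" "\<lambda>t. ?T t q"] mem by simp
    finally show "(\<Sum>t \<in> paths ls \<times> R \<times> paths ls. (if t = (q1, r, q2) then 1 else 0) * ?T t q) = ?T (q1, r, q2) q" .
  qed
  then show ?thesis unfolding inI_def by (intro exI[where x="\<lambda>t. if t = (q1, r, q2) then 1 else 0"]) auto
qed

lemma sandwich:
  assumes "in_eAe ls x y r" "x \<in> verts ls" "y \<in> verts ls"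
  shows "mul ls (mul ls (delta (Triv x)) r) (delta (Triv y)) = r"
proof
  fix p
  show "mul ls (mul ls (delta (Triv x)) r) (delta (Triv y)) p = r p"
    using assms unfolding in_eAe_def by (auto simp: mul_Triv_left mul_Triv_right)
qed

lemma inI_R:
  assumes "finite R" "r \<in> R" "in_eAe ls x y r" "x \<in> verts ls" "y \<in> verts ls"
  shows "inI ls R r"
  using inI_gen[OF assms(1,2) Triv_in_paths[OF assms(4)] Triv_in_paths[OF assms(5)]] sandwich[OF assms(3-5)]
  by simp

lemma inI_R_smult:
  assumes "finite R" "r \<in> R" "in_eAe ls x y r" "x \<in> verts ls" "y \<in> verts ls"
  shows "inI ls R (\<lambda>q. k * r q)"
  using inI_smult[OF inI_R[OF assms]] .


abbreviation br :: "nat list \<Rightarrow> nat \<Rightarrow> path" where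
  "br ls i \<equiv> Pth i 0 (ls ! i)"

locale toupie =
  fixes ls :: "nat list" and Mon :: "(nat \<times> nat \<times> nat) set" and nr :: nat
    and b :: "nat \<Rightarrow> nat \<Rightarrow> 'k::field_char_0" and kp :: "nat \<Rightarrow> nat"
    and a nl nm nn :: nat
  assumes tp: "toupie_pres ls Mon nr b kp a nl nm nn"
begin

abbreviation "len \<equiv> length ls"
abbreviation "R \<equiv> rels ls Mon nr b"

lemma tpu: "a + nl + nm + nn = length ls \<and> 0 < length ls
     \<and> (\<forall>i < a. ls ! i = 1)
     \<and> (\<forall>i. a \<le> i \<and> i < length ls \<longrightarrow> 2 \<le> ls ! i)
     \<and> (\<forall>i j l'. (i, j, l') \<in> Mon \<longrightarrow> a + nl \<le> i \<and> i < a + nl + nm \<and> j + 2 \<le> l' \<and> l' \<le> ls ! i)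
     \<and> (\<forall>i. a + nl \<le> i \<and> i < a + nl + nm \<longrightarrow> has_mon Mon i)
     \<and> (\<forall>s < nr. \<forall>i. i < a + nl + nm \<or> length ls \<le> i \<longrightarrow> b s i = 0)
     \<and> (\<forall>i. a + nl + nm \<le> i \<and> i < length ls \<longrightarrow> (\<exists>s < nr. b s i \<noteq> 0))
     \<and> (\<forall>s < nr. \<exists>i. i \<noteq> kp s \<and> b s i \<noteq> 0)
     \<and> (\<forall>s < nr. b s (kp s) = 1 \<and> (\<forall>i < kp s. b s i = 0))
     \<and> (\<forall>s s'. s < s' \<and> s' < nr \<longrightarrow> kp s < kp s')
     \<and> (\<forall>s < nr. \<forall>s' < nr. s' \<noteq> s \<longrightarrow> b s' (kp s) = 0)
     \<and> (\<forall>R'. R' \<subset> rels ls Mon nr b \<longrightarrow> (\<exists>u. inI ls (rels ls Mon nr b) u \<and> \<not> inI ls R' u))"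
  using tp unfolding toupie_pres_def by assumption

lemma len: "a + nl + nm + nn = len" using tpu by (elim conjE)
lemma len_pos: "0 < len" using tpu by (elim conjE)
lemma ls_one: "i < a \<Longrightarrow> ls ! i = 1" using tpu by (elim conjE) blast
lemma ls_two: "a \<le> i \<Longrightarrow> i < len \<Longrightarrow> 2 \<le> ls ! i" using tpu by (elim conjE) blast
lemma monD: "(i, j, l') \<in> Mon \<Longrightarrow> a + nl \<le> i \<and> i < a + nl + nm \<and> j + 2 \<le> l' \<and> l' \<le> ls ! i"
  using tpu by (elim conjE) blast
lemma hm: "a + nl \<le> i \<Longrightarrow> i < a + nl + nm \<Longrightarrow> has_mon Mon i" using tpu by (elim conjE) blast
lemma bz: "s < nr \<Longrightarrow> i < a + nl + nm \<or> len \<le> i \<Longrightarrow> b s i = 0" using tpu by (elim conjE) blast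
lemma ncov: "a + nl + nm \<le> i \<Longrightarrow> i < len \<Longrightarrow> \<exists>s < nr. b s i \<noteq> 0" using tpu by (elim conjE) blast
lemma nontriv: "s < nr \<Longrightarrow> \<exists>i. i \<noteq> kp s \<and> b s i \<noteq> 0" using tpu by (elim conjE) blast
lemma piv: "s < nr \<Longrightarrow> b s (kp s) = 1" using tpu by (elim conjE) blast
lemma pivcol: "s < nr \<Longrightarrow> s' < nr \<Longrightarrow> s' \<noteq> s \<Longrightarrow> b s' (kp s) = 0" using tpu by (elim conjE) blast

lemma ls_pos: "i < len \<Longrightarrow> 0 < ls ! i"
  using ls_one[of i] ls_two[of i] by (cases "i < a") auto

lemma has_mon_range: "has_mon Mon i \<Longrightarrow> a + nl \<le> i \<and> i < a + nl + nm"
  unfolding has_mon_def using monD by blast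

lemma has_mon_len: "has_mon Mon i \<Longrightarrow> i < len \<and> 2 \<le> ls ! i \<and> a \<le> i"
  using has_mon_range len ls_two by fastforce

lemma b_nz: "s < nr \<Longrightarrow> b s i \<noteq> 0 \<Longrightarrow> a + nl + nm \<le> i \<and> i < len"
  using bz by (meson not_le)

lemma b_nz2: "s < nr \<Longrightarrow> b s i \<noteq> 0 \<Longrightarrow> \<not> has_mon Mon i \<and> 2 \<le> ls ! i \<and> a \<le> i \<and> i < len"
  using b_nz has_mon_range ls_two by fastforce

lemma kp_range: "s < nr \<Longrightarrow> a + nl + nm \<le> kp s \<and> kp s < len"
  using b_nz piv by fastforce

lemma kp_inj: "s < nr \<Longrightarrow> s' < nr \<Longrightarrow> kp s = kp s' \<Longrightarrow> s = s'"
  using piv pivcol by (metis one_neq_zero)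

lemma br_in_paths: "i < len \<Longrightarrow> br ls i \<in> paths ls"
  using ls_pos by (intro Pth_in_paths) auto

lemma psrc_br: "psrc ls (br ls i) = Src" by (simp add: vtx_def)
lemma ptgt_br: "i < len \<Longrightarrow> ptgt ls (br ls i) = Snk" using ls_pos by (auto simp: vtx_def)

lemma branch_apply: "branch ls i p = (if p = br ls i then 1 else 0)"
  by (simp add: branch_def delta_def)

lemma rho_apply: "rho ls b s p = (\<Sum>i<len. b s i * branch ls i p)"
  by (simp add: rho_def)

lemma rho_br: "s < nr \<Longrightarrow> rho ls b s (br ls k) = b s k"
proof -
  assume s: "s < nr"
  have "rho ls b s (br ls k) = (\<Sum>i<len. if i = k then b s i else 0)"
    unfolding rho_apply branch_apply by (intro sum.cong) auto
  also have "\<dots> = b s k" using bz[OF s] by (auto simp: sum.delta')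
  finally show ?thesis .
qed

lemma rho_supp: "rho ls b s p \<noteq> 0 \<Longrightarrow> \<exists>k<len. p = br ls k \<and> b s k \<noteq> 0"
proof (rule ccontr)
  assume h: "rho ls b s p \<noteq> 0" "\<not> (\<exists>k<len. p = br ls k \<and> b s k \<noteq> 0)"
  then have "rho ls b s p = 0" unfolding rho_apply branch_apply by (intro sum.neutral) auto
  with h show False by simp
qed

lemma rho_inj: "s < nr \<Longrightarrow> s' < nr \<Longrightarrow> rho ls b s = rho ls b s' \<Longrightarrow> s = s'"
proof (rule ccontr)
  assume h: "s < nr" "s' < nr" "rho ls b s = rho ls b s'" "s \<noteq> s'"
  have "rho ls b s (br ls (kp s)) = 1" using rho_br[OF h(1)] piv[OF h(1)] by simp
  moreover have "rho ls b s' (br ls (kp s)) = 0" using rho_br[OF h(2)] pivcol[OF h(1) h(2)] h(4) by simp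
  ultimately show False using h(3) by simp
qed

lemma rho_not_delta: "s < nr \<Longrightarrow> rho ls b s \<noteq> delta P"
proof
  assume h: "s < nr" "rho ls b s = delta P"
  obtain i where i: "i \<noteq> kp s" "b s i \<noteq> 0" using nontriv h by blast
  have "rho ls b s (br ls (kp s)) = 1" using rho_br[OF h(1)] piv[OF h(1)] by simp
  then have "P = br ls (kp s)" using h(2) by (auto simp: delta_apply split: if_splits)
  moreover have "rho ls b s (br ls i) \<noteq> 0" using rho_br[OF h(1)] i by simp
  then have "P = br ls i" using h(2) by (auto simp: delta_apply split: if_splits)
  ultimately show False using i by simp
qed

lemma finite_Mon: "finite Mon"
proof -
  have "Mon \<subseteq> {..<len} \<times> {..sum_list ls} \<times> {..sum_list ls}"
  proof
    fix x assume "x \<in> Mon"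
    then obtain i j l' where x: "x = (i, j, l')" "(i, j, l') \<in> Mon" by (cases x) auto
    then have "i < len" "j + 2 \<le> l'" "l' \<le> ls ! i" using monD len by fastforce+
    moreover have "ls ! i \<le> sum_list ls" using \<open>i < len\<close> by (simp add: elem_le_sum_list)
    ultimately show "x \<in> {..<len} \<times> {..sum_list ls} \<times> {..sum_list ls}" using x by auto
  qed
  then show ?thesis by (rule finite_subset) auto
qed

lemma finite_R: "finite R"
  unfolding rels_def using finite_Mon by simp

lemma mon_eAe: "(i, j, l') \<in> Mon \<Longrightarrow> in_eAe ls (vtx ls i j) (vtx ls i l') (delta (Pth i j l'))"
  using monD[of i j l'] len by (auto simp: in_eAe_def delta_def intro: Pth_in_paths)

lemma mon_verts: "(i, j, l') \<in> Mon \<Longrightarrow> vtx ls i j \<in> verts ls \<and> vtx ls i l' \<in> verts ls"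
  using monD[of i j l'] len by (auto intro!: vtx_in_verts)

lemma Src_verts: "Src \<in> verts ls" and Snk_verts: "Snk \<in> verts ls"
  by (auto simp: verts_def)

lemma rho_eAe: "s < nr \<Longrightarrow> in_eAe ls Src Snk (rho ls b s)"
  unfolding in_eAe_def using rho_supp br_in_paths psrc_br ptgt_br by blast

lemma inI_rho: "s < nr \<Longrightarrow> inI ls R (rho ls b s)"
  by (rule inI_R[OF finite_R _ rho_eAe Src_verts Snk_verts]) (auto simp: rels_def)

lemma inI_mon: "(i, j, l') \<in> Mon \<Longrightarrow> inI ls R (delta (Pth i j l'))"
proof -
  assume h: "(i, j, l') \<in> Mon"
  have "delta (Pth i j l') \<in> R" unfolding rels_def using h by (auto intro!: rev_image_eqI[where x="(i,j,l')"])
  then show ?thesis using mon_verts[OF h] by (intro inI_R[OF finite_R _ mon_eAe[OF h]]) auto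
qed

end


definition Tm :: "nat list \<Rightarrow> path \<times> 'k::field kq \<times> path \<Rightarrow> 'k kq" where
  "Tm ls t = mul ls (mul ls (delta (fst t)) (fst (snd t))) (delta (snd (snd t)))"

lemma inI_Tm: "inI ls R u \<longleftrightarrow> (\<exists>c. u = (\<lambda>q. \<Sum>t \<in> paths ls \<times> R \<times> paths ls. c t * Tm ls t q))"
  unfolding inI_def Tm_def by simp

context toupie
begin

lemma rels_cases:
  assumes "r \<in> R"
  obtains (mon) i j l' where "(i, j, l') \<in> Mon" "r = delta (Pth i j l')"
    | (rho) s where "s < nr" "r = rho ls b s"
  using assms unfolding rels_def by auto

lemma rel_plen: "r \<in> R \<Longrightarrow> r y \<noteq> 0 \<Longrightarrow> 2 \<le> plen y"
proof (induction rule: rels_cases)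
  case (mon i j l')
  then show ?case using monD[of i j l'] by (auto simp: delta_apply split: if_splits)
next
  case (rho s)
  then obtain k where "k < len" "y = br ls k" "b s k \<noteq> 0" using rho_supp by blast
  then show ?case using b_nz2[OF rho(1)] by auto
qed


lemma Tm_plen:
  assumes "t \<in> paths ls \<times> R \<times> paths ls" "Tm ls t p \<noteq> 0"
  shows "2 \<le> plen p"
proof -
  obtain q1 r q2 where t: "t = (q1, r, q2)" by (cases t) auto
  have "mul ls (mul ls (delta q1) r) (delta q2) p \<noteq> 0" using assms(2) by (simp add: Tm_def t)
  from mul_supp[OF this] obtain x y where xy: "x \<in> paths ls" "y \<in> paths ls" "pcat ls x y = Some p"
     "mul ls (delta q1) r x \<noteq> 0" by blast
  from mul_supp[OF xy(4)] obtain x' y' where xy': "x' \<in> paths ls" "y' \<in> paths ls" "pcat ls x' y' = Some x" "r y' \<noteq> 0"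
    by blast
  have "2 \<le> plen y'" using rel_plen xy'(4) assms(1) t by auto
  then show ?thesis using plen_pcat[OF xy(1-3)] plen_pcat[OF xy'(1-3)] by simp
qed


lemma Tm_mon_supp:
  assumes "Tm ls (q1, delta (Pth i j l') :: 'k kq, q2) p \<noteq> 0"
  shows "\<exists>j0 l0. p = Pth i j0 l0"
proof -
  have "mul ls (mul ls (delta q1) (delta (Pth i j l') :: 'k kq)) (delta q2) p \<noteq> 0" using assms by (simp add: Tm_def)
  from mul_supp[OF this] obtain x y where xy: "x \<in> paths ls" "y \<in> paths ls" "pcat ls x y = Some p"
     "mul ls (delta q1) (delta (Pth i j l') :: 'k kq) x \<noteq> 0" by blast
  from mul_supp[OF xy(4)] obtain x' y' where xy': "x' \<in> paths ls" "y' \<in> paths ls" "pcat ls x' y' = Some x"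
     "(delta (Pth i j l') :: 'k kq) y' \<noteq> 0" by blast
  have "y' = Pth i j l'" using xy'(4) by (simp add: delta_apply split: if_splits)
  then have "pcat ls x' (Pth i j l') = Some x" using xy'(3) by simp
  from pcat_right_Pth[OF xy'(1) this] obtain j1 where "x = Pth i j1 l'" by auto
  then have "pcat ls (Pth i j1 l') y = Some p" using xy(3) by simp
  from pcat_left_Pth[OF xy(2) this] obtain l0 where "p = Pth i j1 l0" by auto
  then show ?thesis by auto
qed


lemma pcat_br_left:
  assumes "q \<in> paths ls" "pcat ls q (br ls k) = Some p"
  shows "q = Triv Src"
  using assms by (cases q) (auto simp: vtx_def split: if_splits dest!: Pth_in_pathsD)

lemma pcat_br_right:
  assumes "q \<in> paths ls" "k < len" "pcat ls (br ls k) q = Some p"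
  shows "q = Triv Snk"
  using assms ls_pos[OF assms(2)] by (cases q) (auto simp: vtx_def split: if_splits dest!: Pth_in_pathsD)

lemma mul_left_br:
  assumes "q \<in> paths ls" "\<And>p. v p \<noteq> 0 \<Longrightarrow> \<exists>k<len. p = br ls k"
  shows "mul ls (delta q) v p = (if q = Triv Src then v p else 0)"
proof (cases "q = Triv Src")
  case True
  have "v p \<noteq> 0 \<Longrightarrow> p \<in> paths ls \<and> psrc ls p = Src" using assms(2) br_in_paths psrc_br by blast
  then show ?thesis using True by (auto simp: mul_Triv_left Src_verts)
next
  case False
  have "(\<Sum>y\<in>{y\<in>paths ls. pcat ls q y = Some p}. v y) = 0"
  proof (intro sum.neutral ballI)
    fix y assume y: "y \<in> {y\<in>paths ls. pcat ls q y = Some p}"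
    show "v y = 0"
    proof (rule ccontr)
      assume "v y \<noteq> 0"
      then obtain k where "y = br ls k" using assms(2) by blast
      then show False using pcat_br_left[OF assms(1)] y False by auto
    qed
  qed
  then show ?thesis using False by (simp add: mul_delta_left)
qed

lemma mul_right_br:
  assumes "q \<in> paths ls" "\<And>p. v p \<noteq> 0 \<Longrightarrow> \<exists>k<len. p = br ls k"
  shows "mul ls v (delta q) p = (if q = Triv Snk then v p else 0)"
proof (cases "q = Triv Snk")
  case True
  have "v p \<noteq> 0 \<Longrightarrow> p \<in> paths ls \<and> ptgt ls p = Snk" using assms(2) br_in_paths ptgt_br by blast
  then show ?thesis using True by (auto simp: mul_Triv_right Snk_verts)
next
  case False
  have "(\<Sum>y\<in>{y\<in>paths ls. pcat ls y q = Some p}. v y) = 0"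
  proof (intro sum.neutral ballI)
    fix y assume y: "y \<in> {y\<in>paths ls. pcat ls y q = Some p}"
    show "v y = 0"
    proof (rule ccontr)
      assume "v y \<noteq> 0"
      then obtain k where "k < len" "y = br ls k" using assms(2) by blast
      then show False using pcat_br_right[OF assms(1)] y False by auto
    qed
  qed
  then show ?thesis using False by (simp add: mul_delta_right)
qed

lemma Tm_rho:
  assumes "q1 \<in> paths ls" "q2 \<in> paths ls" "s < nr"
  shows "Tm ls (q1, rho ls b s, q2) p = (if q1 = Triv Src \<and> q2 = Triv Snk then rho ls b s p else 0)"
proof -
  have supp: "\<And>p. rho ls b s p \<noteq> 0 \<Longrightarrow> \<exists>k<len. p = br ls k" using rho_supp by blast
  have W: "mul ls (delta q1) (rho ls b s) = (\<lambda>p. if q1 = Triv Src then rho ls b s p else 0)"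
    using mul_left_br[OF assms(1) supp] by auto
  have supp2: "\<And>p. (if q1 = Triv Src then rho ls b s p else 0) \<noteq> 0 \<Longrightarrow> \<exists>k<len. p = br ls k"
    using supp by (auto split: if_splits)
  show ?thesis unfolding Tm_def by (simp add: W mul_right_br[OF assms(2) supp2])
qed

lemma Tm_br:
  assumes "t \<in> paths ls \<times> R \<times> paths ls" "i < len" "\<not> has_mon Mon i"
  shows "Tm ls t (br ls i) = (\<Sum>s<nr. if t = (Triv Src, rho ls b s, Triv Snk) then b s i else 0)"
proof -
  obtain q1 r q2 where t: "t = (q1, r, q2)" "q1 \<in> paths ls" "r \<in> R" "q2 \<in> paths ls"
    using assms(1) by (cases t) auto
  show ?thesis using t(3)
  proof (cases rule: rels_cases)
    case (mon i' j l')
    have "Tm ls t (br ls i) = 0"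
    proof (rule ccontr)
      assume "Tm ls t (br ls i) \<noteq> 0"
      then obtain j0 l0 where "br ls i = Pth i' j0 l0" using Tm_mon_supp t mon by blast
      then have "i = i'" by simp
      then show False using assms(3) mon(1) unfolding has_mon_def by blast
    qed
    moreover have "(\<Sum>s<nr. if t = (Triv Src, rho ls b s, Triv Snk) then b s i else 0) = 0"
    proof (intro sum.neutral ballI)
      fix s assume s: "s \<in> {..<nr}"
      have "t \<noteq> (Triv Src, rho ls b s, Triv Snk)"
        using rho_not_delta[of s "Pth i' j l'"] s mon(2) t(1) by auto
      then show "(if t = (Triv Src, rho ls b s, Triv Snk) then b s i else 0) = 0" by simp
    qed
    ultimately show ?thesis by simp
  next
    case (rho s0)
    have "(\<Sum>s<nr. if t = (Triv Src, rho ls b s, Triv Snk) then b s i else 0)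
        = (\<Sum>s<nr. if s = s0 then (if q1 = Triv Src \<and> q2 = Triv Snk then b s i else 0) else 0)"
      using rho_inj rho(1) by (intro sum.cong) (auto simp: t(1) rho(2))
    also have "\<dots> = (if q1 = Triv Src \<and> q2 = Triv Snk then b s0 i else 0)" using rho(1) by simp
    also have "\<dots> = Tm ls t (br ls i)" using Tm_rho[OF t(2,4) rho(1)] rho_br[OF rho(1)] t(1) rho(2) by simp
    finally show ?thesis by simp
  qed
qed

lemma I_char:
  assumes "inI ls R u"
  shows "(\<forall>i j. u (Pth i j (Suc j)) = 0) \<and>
         (\<exists>lam. \<forall>i<len. \<not> has_mon Mon i \<longrightarrow> u (br ls i) = (\<Sum>s<nr. lam s * b s i))"
proof -
  obtain c where c: "u = (\<lambda>q. \<Sum>t \<in> paths ls \<times> R \<times> paths ls. c t * Tm ls t q)"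
    using assms inI_Tm by blast
  have fin: "finite (paths ls \<times> R \<times> paths ls)" using finite_R finite_paths by simp
  have A: "u (Pth i j (Suc j)) = 0" for i j
  proof -
    have "Tm ls t (Pth i j (Suc j)) = 0" if "t \<in> paths ls \<times> R \<times> paths ls" for t
      using Tm_plen[OF that, of "Pth i j (Suc j)"] by fastforce
    then show ?thesis unfolding c by simp
  qed
  have B: "u (br ls i) = (\<Sum>s<nr. c (Triv Src, rho ls b s, Triv Snk) * b s i)" if "i < len" "\<not> has_mon Mon i" for i
  proof -
    have "u (br ls i) = (\<Sum>t \<in> paths ls \<times> R \<times> paths ls. \<Sum>s<nr. if t = (Triv Src, rho ls b s, Triv Snk) then c t * b s i else 0)"
      unfolding c using Tm_br[OF _ that] by (simp add: sum_distrib_left if_distrib[where f="\<lambda>x. c _ * x"] cong: if_cong)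
    also have "\<dots> = (\<Sum>s<nr. \<Sum>t \<in> paths ls \<times> R \<times> paths ls. if t = (Triv Src, rho ls b s, Triv Snk) then c t * b s i else 0)"
      by (rule sum.swap)
    also have "\<dots> = (\<Sum>s<nr. c (Triv Src, rho ls b s, Triv Snk) * b s i)"
    proof (intro sum.cong refl)
      fix s assume s: "s \<in> {..<nr}"
      have "(Triv Src, rho ls b s, Triv Snk) \<in> paths ls \<times> R \<times> paths ls"
        using s by (auto simp: rels_def Triv_in_paths Src_verts Snk_verts)
      then show "(\<Sum>t \<in> paths ls \<times> R \<times> paths ls. if t = (Triv Src, rho ls b s, Triv Snk) then c t * b s i else 0)
          = c (Triv Src, rho ls b s, Triv Snk) * b s i"
        using sum.delta'[OF fin, of "(Triv Src, rho ls b s, Triv Snk)" "\<lambda>t. c t * b s i"]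
        by (simp add: eq_commute[of _ "(Triv Src, rho ls b s, Triv Snk)"])
    qed
    finally show ?thesis .
  qed
  show ?thesis using A B by (intro conjI allI exI[where x="\<lambda>s. c (Triv Src, rho ls b s, Triv Snk)"]) auto
qed


lemma eAe_arrow:
  assumes "i < len" "h < ls ! i" "2 \<le> ls ! i" "in_eAe ls (vtx ls i h) (vtx ls i (Suc h)) u"
  shows "u = (\<lambda>p. u (Pth i h (Suc h)) * delta (Pth i h (Suc h)) p)"
proof
  fix p
  show "u p = u (Pth i h (Suc h)) * delta (Pth i h (Suc h)) p"
  proof (cases "u p = 0")
    case False
    then have p: "p \<in> paths ls" "psrc ls p = vtx ls i h" "ptgt ls p = vtx ls i (Suc h)"
      using assms(4) unfolding in_eAe_def by auto
    have "p = Pth i h (Suc h)"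
    proof (cases p)
      case (Triv x)
      then have "vtx ls i h = vtx ls i (Suc h)" using p by simp
      then have False using vtx_eq_iff[of i ls h i "Suc h"] assms(1,2,3) by simp
      then show ?thesis ..
    next
      case (Pth k j l')
      then have k: "k < len" "j < l'" "l' \<le> ls ! k" using p Pth_in_pathsD by auto
      have e1: "vtx ls k j = vtx ls i h" "vtx ls k l' = vtx ls i (Suc h)" using p Pth by auto
      have pk: "0 < ls ! k" using k by simp
      have pi: "0 < ls ! i" using assms(3) by simp
      have A: "(j = 0 \<and> h = 0) \<or> (j = ls!k \<and> h = ls!i) \<or> (k = i \<and> j = h)"
        using vtx_eq_iff[of k ls j i h] k assms(1,2) pk pi e1(1) by simp
      have B: "(l' = 0 \<and> Suc h = 0) \<or> (l' = ls!k \<and> Suc h = ls!i) \<or> (k = i \<and> l' = Suc h)"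
        using vtx_eq_iff[of k ls l' i "Suc h"] k assms(1,2) pk pi e1(2) by simp
      have nj: "j \<noteq> ls ! k" using k by simp
      show ?thesis
      proof (cases "k = i")
        case True
        then have "j = h" using A nj by blast
        moreover have "l' = Suc h" using B True \<open>j = h\<close> k(2) by auto
        ultimately show ?thesis using Pth True by simp
      next
        case False
        then have "Suc h = ls ! i" using B by blast
        moreover have "h = 0" using A nj False by blast
        ultimately show ?thesis using assms(3) by simp
      qed
    qed
    then show ?thesis by (simp add: delta_apply)
  next
    case True
    then show ?thesis by (auto simp: delta_apply)
  qed
qed

lemma eAe_SrcSnk:
  assumes "in_eAe ls Src Snk u"
  shows "u = (\<lambda>p. \<Sum>q<len. u (br ls q) * branch ls q p)"
proof
  fix p
  show "u p = (\<Sum>q<len. u (br ls q) * branch ls q p)"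
  proof (cases "\<exists>k<len. p = br ls k")
    case True
    then obtain k where k: "k < len" "p = br ls k" by blast
    have "(\<Sum>q<len. u (br ls q) * branch ls q p) = (\<Sum>q<len. if q = k then u (br ls q) else 0)"
      by (intro sum.cong) (auto simp: branch_apply k)
    then show ?thesis using k by simp
  next
    case False
    have "u p = 0"
    proof (rule ccontr)
      assume "u p \<noteq> 0"
      then have p: "p \<in> paths ls" "psrc ls p = Src" "ptgt ls p = Snk" using assms unfolding in_eAe_def by auto
      then show False using False
        by (cases p) (auto simp: vtx_def split: if_splits dest!: Pth_in_pathsD)
    qed
    moreover have "(\<Sum>q<len. u (br ls q) * branch ls q p) = 0"
      using False by (intro sum.neutral) (auto simp: branch_apply)
    ultimately show ?thesis by simp
  qed
qed

lemma eAe_loop: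
  assumes "in_eAe ls x x u"
  shows "u = (\<lambda>p. u (Triv x) * delta (Triv x) p)"
proof
  fix p
  show "u p = u (Triv x) * delta (Triv x) p"
  proof (cases "u p = 0")
    case False
    then have p: "p \<in> paths ls" "psrc ls p = x" "ptgt ls p = x"
      using assms unfolding in_eAe_def by auto
    have "p = Triv x"
    proof (cases p)
      case (Triv y) then show ?thesis using p by simp
    next
      case (Pth k j l')
      then have k: "k < len" "j < l'" "l' \<le> ls ! k" using p Pth_in_pathsD by auto
      have "vtx ls k j = vtx ls k l'" using p Pth by auto
      then show ?thesis using vtx_eq_iff[of k ls j k l'] k ls_pos[OF k(1)] by simp
    qed
    then show ?thesis by (simp add: delta_apply)
  qed (auto simp: delta_apply)
qed

abbreviation cf :: "'k hom1 \<Rightarrow> nat \<Rightarrow> nat \<Rightarrow> 'k" where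
  "cf f i h \<equiv> f (i, h) (Pth i h (Suc h))"

lemma arrows_iff: "(i, h) \<in> arrows ls \<longleftrightarrow> i < len \<and> h < ls ! i"
  by (simp add: arrows_def)

lemma hom1_arrow:
  assumes "hom1 ls f" "a \<le> i" "i < len" "h < ls ! i"
  shows "f (i, h) = (\<lambda>p. cf f i h * delta (Pth i h (Suc h)) p)"
proof -
  have "in_eAe ls (vtx ls i h) (vtx ls i (Suc h)) (f (i, h))"
    using assms(1,3,4) unfolding hom1_def by (auto simp: arrows_iff)
  then show ?thesis using eAe_arrow assms ls_two by blast
qed

lemma hom1_first:
  assumes "hom1 ls f" "p < a"
  shows "f (p, 0) = (\<lambda>x. \<Sum>q<len. f (p, 0) (br ls q) * branch ls q x)"
proof -
  have pl: "p < len" using assms len by simp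
  have "in_eAe ls (vtx ls p 0) (vtx ls p 1) (f (p, 0))"
    using assms(1) pl ls_pos[OF pl] unfolding hom1_def by (auto simp: arrows_iff)
  moreover have "vtx ls p 0 = Src" "vtx ls p 1 = Snk" using ls_one[OF assms(2)] by (auto simp: vtx_def)
  ultimately show ?thesis using eAe_SrcSnk by simp
qed

lemma hom0_val:
  assumes "hom0 ls g" "x \<in> verts ls"
  shows "g x = (\<lambda>p. g x (Triv x) * delta (Triv x) p)"
  using assms eAe_loop unfolding hom0_def by blast

lemma D0_val:
  assumes "hom0 ls g" "i < len" "h < ls ! i"
  shows "D0 ls g (i, h) = (\<lambda>p. (g (vtx ls i (Suc h)) (Triv (vtx ls i (Suc h))) - g (vtx ls i h) (Triv (vtx ls i h)))
             * delta (Pth i h (Suc h)) p)"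
proof
  fix p
  let ?s = "vtx ls i h" and ?t = "vtx ls i (Suc h)" and ?A = "Pth i h (Suc h)"
  have sv: "?s \<in> verts ls" "?t \<in> verts ls" using assms by (auto intro!: vtx_in_verts)
  have Ap: "?A \<in> paths ls" using assms by (auto intro!: Pth_in_paths)
  have m1: "mul ls (delta ?A) (g ?t) p = g ?t (Triv ?t) * delta ?A p"
    apply (subst hom0_val[OF assms(1) sv(2)])
    apply (simp add: mul_smult_right)
    by (simp add: mul_dd_Some[OF Ap Triv_in_paths[OF sv(2)]])
  have m2: "mul ls (g ?s) (delta ?A) p = g ?s (Triv ?s) * delta ?A p"
    apply (subst hom0_val[OF assms(1) sv(1)])
    apply (simp add: mul_smult_left)
    by (simp add: mul_dd_Some[OF Triv_in_paths[OF sv(1)] Ap])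
  show "D0 ls g (i, h) p = (g ?t (Triv ?t) - g ?s (Triv ?s)) * delta ?A p"
    using assms m1 m2 by (simp add: D0_def arrows_iff left_diff_distrib)
qed

lemma sp_paths: "i < len \<Longrightarrow> j \<le> h \<Longrightarrow> h \<le> ls ! i \<Longrightarrow> sp ls i j h \<in> paths ls"
  by (auto simp: sp_def intro!: Pth_in_paths Triv_in_paths vtx_in_verts)

lemma D1_delta: "P \<in> paths ls \<Longrightarrow> D1 ls f (delta P) = D1p ls f P"
  unfolding D1_def by (auto simp: delta_apply if_distrib[where f="\<lambda>x. x * _"] sum.delta' finite_paths cong: if_cong)

lemma D1_rho: "D1 ls f (rho ls b s) = (\<lambda>q. \<Sum>k<len. b s k * D1p ls f (br ls k) q)"
proof
  fix q
  have "D1 ls f (rho ls b s) q = (\<Sum>p\<in>paths ls. \<Sum>k<len. b s k * (branch ls k p * D1p ls f p q))"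
    unfolding D1_def rho_apply by (simp add: sum_distrib_right mult.assoc)
  also have "\<dots> = (\<Sum>k<len. b s k * (\<Sum>p\<in>paths ls. branch ls k p * D1p ls f p q))"
    by (simp add: sum.swap[where B="{..<len}"] sum_distrib_left)
  also have "\<dots> = (\<Sum>k<len. b s k * D1p ls f (br ls k) q)"
  proof (intro sum.cong refl)
    fix k assume "k \<in> {..<len}"
    then have "br ls k \<in> paths ls" using br_in_paths by simp
    then show "b s k * (\<Sum>p\<in>paths ls. branch ls k p * D1p ls f p q) = b s k * D1p ls f (br ls k) q"
      by (simp add: branch_apply if_distrib[where f="\<lambda>x. x * _"] sum.delta' finite_paths cong: if_cong)
  qed
  finally show "D1 ls f (rho ls b s) q = (\<Sum>k<len. b s k * D1p ls f (br ls k) q)" .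
qed

lemma D1p_formula:
  assumes "hom1 ls f" "a \<le> i" "i < len" "j < l'" "l' \<le> ls ! i"
  shows "D1p ls f (Pth i j l') = (\<lambda>q. (\<Sum>h\<in>{j..<l'}. cf f i h) * delta (Pth i j l') q)"
proof
  fix q
  have tmh: "mul ls (mul ls (delta (sp ls i j h)) (f (i, h))) (delta (sp ls i (Suc h) l')) q
        = cf f i h * delta (Pth i j l') q" if h: "h \<in> {j..<l'}" for h
  proof -
    have hl: "h < ls ! i" using h assms by simp
    have sp1: "sp ls i j h \<in> paths ls" using h assms by (intro sp_paths) auto
    have sp2: "sp ls i (Suc h) l' \<in> paths ls" using h assms by (intro sp_paths) auto
    have Ap: "Pth i h (Suc h) \<in> paths ls" using assms hl by (intro Pth_in_paths) auto
    have Bp: "Pth i j (Suc h) \<in> paths ls" using assms hl h by (intro Pth_in_paths) auto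
    have c1: "pcat ls (sp ls i j h) (Pth i h (Suc h)) = Some (Pth i j (Suc h))"
      by (auto simp: sp_def)
    have c2: "pcat ls (Pth i j (Suc h)) (sp ls i (Suc h) l') = Some (Pth i j l')"
      by (auto simp: sp_def)
    have inner: "mul ls (delta (sp ls i j h)) (f (i, h)) = (\<lambda>p. cf f i h * delta (Pth i j (Suc h)) p)"
    proof
      fix p
      show "mul ls (delta (sp ls i j h)) (f (i, h)) p = cf f i h * delta (Pth i j (Suc h)) p"
        apply (subst hom1_arrow[OF assms(1-3) hl])
        apply (simp only: mul_smult_right)
        by (simp add: mul_dd_Some[OF sp1 Ap c1])
    qed
    show ?thesis
      unfolding inner mul_smult_left by (simp add: mul_dd_Some[OF Bp sp2 c2])
  qed
  show "D1p ls f (Pth i j l') q = (\<Sum>h\<in>{j..<l'}. cf f i h) * delta (Pth i j l') q"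
    by (simp add: tmh sum_distrib_right)
qed

end



fun cov :: "idx \<Rightarrow> nat \<Rightarrow> bool" where
  "cov (Yi i') i = (i' = i)"
| "cov (Ti K) i = (i \<in> K)"
| "cov _ i = False"

fun ev :: "idx \<Rightarrow> nat \<Rightarrow> nat \<Rightarrow> 'k::field" where
  "ev (Wi p q') u q = (if p = u \<and> q' = q then 1 else 0)"
| "ev (Zi p s) u q = (if p = u \<and> s = q then 1 else 0)"
| "ev (Xi j) u q = (if j = u \<and> q = u then 1 else 0) - (if u = 0 \<and> q = 0 then 1 else 0)"
| "ev _ u q = 0"

lemma sum_pick:
  assumes "finite S" "j0 \<in> S" "\<And>j. j \<in> S \<Longrightarrow> v j = (if j = j0 then 1 else (0::'k::field))"
  shows "(\<Sum>j\<in>S. c j * v j) = c j0"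
proof -
  have "(\<Sum>j\<in>S. c j * v j) = (\<Sum>j\<in>S. if j = j0 then c j else 0)"
    using assms(3) by (intro sum.cong) auto
  then show ?thesis using assms(1,2) by simp
qed

lemma sum_zero:
  assumes "\<And>j. j \<in> S \<Longrightarrow> v j = 0"
  shows "(\<Sum>j\<in>S. c j * (v j :: 'k::field)) = 0"
  using assms by simp

context toupie
begin

abbreviation "V \<equiv> Vrho ls Mon"
abbreviation "E \<equiv> Erho ls Mon nr b"
abbreviation "CS \<equiv> comps ls Mon nr b"

definition cel :: "nat \<Rightarrow> idx" where
  "cel i = (if has_mon Mon i then Yi i else Ti (E\<^sup>* `` {i}))"

definition good :: "idx \<Rightarrow> bool" where
  "good j = (case j of Yi i \<Rightarrow> i < len \<and> has_mon Mon i | Wi p q \<Rightarrow> p < a \<and> q < a \<and> p \<noteq> q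
      | Zi u s \<Rightarrow> u < a \<and> a \<le> s \<and> s < len | Xi j \<Rightarrow> 1 \<le> j \<and> j < a | Ti K \<Rightarrow> K \<in> CS)"

lemma V_iff: "i \<in> V \<longleftrightarrow> i < len \<and> 2 \<le> ls ! i \<and> \<not> has_mon Mon i"
  by (simp add: Vrho_def)

lemma V_iff2: "a \<le> i \<Longrightarrow> i < len \<Longrightarrow> i \<in> V \<longleftrightarrow> \<not> has_mon Mon i"
  using ls_two by (simp add: V_iff)

lemma V_ge: "i \<in> V \<Longrightarrow> a \<le> i"
  using V_iff ls_one by (metis not_le numeral_le_one_iff semiring_norm(69))

lemma finite_V: "finite V"
  unfolding Vrho_def by simp

lemma E_sub: "E \<subseteq> V \<times> V"
  unfolding Erho_def by auto

lemma E_sym: "sym E"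
  unfolding Erho_def sym_def by blast

lemma Es_sym: "(x, y) \<in> E\<^sup>* \<Longrightarrow> (y, x) \<in> E\<^sup>*"
  using sym_rtrancl[OF E_sym] unfolding sym_def by blast

lemma comp_sub: "i \<in> V \<Longrightarrow> E\<^sup>* `` {i} \<subseteq> V"
proof
  fix k assume i: "i \<in> V" and "k \<in> E\<^sup>* `` {i}"
  then have "(i, k) \<in> E\<^sup>*" by simp
  then show "k \<in> V" using i E_sub by (induction rule: rtrancl_induct) auto
qed

lemma comp_eq: "k \<in> E\<^sup>* `` {i} \<Longrightarrow> E\<^sup>* `` {k} = E\<^sup>* `` {i}"
proof -
  assume "k \<in> E\<^sup>* `` {i}"
  then have ik: "(i, k) \<in> E\<^sup>*" by simp
  then have ki: "(k, i) \<in> E\<^sup>*" by (rule Es_sym)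
  show ?thesis
  proof
    show "E\<^sup>* `` {k} \<subseteq> E\<^sup>* `` {i}" using ik by (auto intro: rtrancl_trans)
    show "E\<^sup>* `` {i} \<subseteq> E\<^sup>* `` {k}" using ki by (auto intro: rtrancl_trans)
  qed
qed

lemma CS_iff: "K \<in> CS \<longleftrightarrow> (\<exists>i\<in>V. K = E\<^sup>* `` {i})"
  unfolding comps_def by auto

lemma finite_CS: "finite CS"
proof -
  have "CS \<subseteq> Pow V"
  proof
    fix K assume "K \<in> CS"
    then obtain i where "i \<in> V" "K = E\<^sup>* `` {i}" by (auto simp: CS_iff)
    then show "K \<in> Pow V" using comp_sub by auto
  qed
  then show ?thesis using finite_V by (meson finite_Pow_iff finite_subset)
qed

lemma CS_sub: "K \<in> CS \<Longrightarrow> K \<subseteq> V"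
  using comp_sub CS_iff by blast

lemma finite_K: "K \<in> CS \<Longrightarrow> finite K"
  using CS_sub finite_V finite_subset by blast

lemma cel_good: "a \<le> i \<Longrightarrow> i < len \<Longrightarrow> good (cel i) \<and> cov (cel i) i"
  using V_iff2[of i] by (auto simp: cel_def good_def CS_iff)

lemma cov_iff:
  assumes "good j" "a \<le> i" "i < len"
  shows "cov j i \<longleftrightarrow> j = cel i"
proof (cases j)
  case (Yi i')
  then show ?thesis using assms by (auto simp: good_def cel_def)
next
  case (Ti K)
  then obtain i0 where i0: "i0 \<in> V" "K = E\<^sup>* `` {i0}" using assms(1) by (auto simp: good_def CS_iff)
  show ?thesis
  proof
    assume "cov j i"
    then have iK: "i \<in> K" using Ti by simp
    then have "i \<in> V" using comp_sub i0 by blast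
    then have "\<not> has_mon Mon i" by (simp add: V_iff)
    moreover have "E\<^sup>* `` {i} = K" using comp_eq iK i0 by simp
    ultimately show "j = cel i" using Ti by (simp add: cel_def)
  next
    assume "j = cel i"
    then have "\<not> has_mon Mon i" "K = E\<^sup>* `` {i}" using Ti by (auto simp: cel_def split: if_splits)
    then show "cov j i" using Ti by simp
  qed
qed (auto simp: cel_def)

lemma elem_br_arrow:
  assumes "good j" "a \<le> i"
  shows "elem ls j (i, h) p = (if h = 0 \<and> p = Pth i 0 1 \<and> cov j i then 1 else 0)"
proof (cases j)
  case (Ti K)
  then have K: "finite K" "K \<subseteq> V" using assms finite_K CS_sub by (auto simp: good_def)
  have "elem ls j (i, h) p = (\<Sum>i'\<in>K. single (i', 0) (delta (arrp (i', 0))) (i, h) p)"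
    by (simp add: Ti)
  also have "\<dots> = (\<Sum>i'\<in>K. if i' = i then (if h = 0 then delta (Pth i 0 1) p else 0) else 0)"
    by (intro sum.cong) (auto simp: single_def)
  also have "\<dots> = (if i \<in> K then (if h = 0 then delta (Pth i 0 1) p else 0) else 0)"
    using K(1) by (simp add: sum.delta')
  finally show ?thesis using Ti by (auto simp: delta_apply)
qed (use assms in \<open>auto simp: good_def single_def delta_apply\<close>)

lemma elem_first_br:
  assumes "good j" "u < a" "q < len"
  shows "elem ls j (u, 0) (br ls q) = ev j u q"
proof (cases j)
  case (Yi i)
  then have "a \<le> i" using assms has_mon_len[of i] by (auto simp: good_def)
  then show ?thesis using assms Yi by (auto simp: single_def)
next
  case (Ti K)
  then have "K \<subseteq> V" using assms CS_sub by (auto simp: good_def)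
  then have "\<forall>i\<in>K. a \<le> i" using V_ge by blast
  then show ?thesis using Ti assms by (auto simp: single_def intro!: sum.neutral)
qed (use assms in \<open>auto simp: good_def single_def branch_apply\<close>)

lemma elem_first_nonbr:
  assumes "good j" "u < a" "\<forall>q<len. x \<noteq> br ls q"
  shows "elem ls j (u, 0) x = 0"
proof (cases j)
  case (Yi i)
  then have "a \<le> i" using assms has_mon_len[of i] by (auto simp: good_def)
  then show ?thesis using assms Yi by (auto simp: single_def)
next
  case (Ti K)
  then have "K \<subseteq> V" using assms CS_sub by (auto simp: good_def)
  then have "\<forall>i\<in>K. a \<le> i" using V_ge by blast
  then show ?thesis using Ti assms by (auto simp: single_def intro!: sum.neutral)
next
  case (Wi p q)
  then show ?thesis using assms len by (auto simp: good_def single_def branch_apply)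
next
  case (Zi p q)
  then show ?thesis using assms len by (auto simp: good_def single_def branch_apply)
next
  case (Xi j')
  then have "j' < len" using assms len by (auto simp: good_def)
  then have "x \<noteq> br ls 0" "x \<noteq> br ls j'" using assms(3) len_pos by blast+
  then show ?thesis using Xi by (simp add: single_def branch_apply)
qed

end



lemma in_eAe_zero: "in_eAe ls x y (\<lambda>p. 0)" by (simp add: in_eAe_def)

lemma in_eAe_add: "in_eAe ls x y u \<Longrightarrow> in_eAe ls x y v \<Longrightarrow> in_eAe ls x y (\<lambda>p. u p + v p)"
  unfolding in_eAe_def by (metis add.left_neutral)

lemma in_eAe_diff: "in_eAe ls x y u \<Longrightarrow> in_eAe ls x y v \<Longrightarrow> in_eAe ls x y (\<lambda>p. u p - v p)"
  unfolding in_eAe_def by (metis diff_self)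

lemma in_eAe_sum: "finite S \<Longrightarrow> (\<And>i. i \<in> S \<Longrightarrow> in_eAe ls x y (u i)) \<Longrightarrow> in_eAe ls x y (\<lambda>p. \<Sum>i\<in>S. u i p)"
proof (induction S rule: finite_induct)
  case empty then show ?case by (simp add: in_eAe_zero)
next
  case (insert x F) then show ?case by (simp add: in_eAe_add)
qed

lemma hom1_single: "\<gamma>0 \<in> arrows ls \<Longrightarrow> in_eAe ls (asrc ls \<gamma>0) (atgt ls \<gamma>0) h \<Longrightarrow> hom1 ls (single \<gamma>0 h)"
  unfolding hom1_def single_def by (auto simp: in_eAe_zero)

lemma hom1_diff: "hom1 ls f \<Longrightarrow> hom1 ls g \<Longrightarrow> hom1 ls (\<lambda>\<gamma> p. f \<gamma> p - g \<gamma> p)"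
  unfolding hom1_def by (auto intro: in_eAe_diff)

lemma hom1_sum: "finite S \<Longrightarrow> (\<And>i. i \<in> S \<Longrightarrow> hom1 ls (f i)) \<Longrightarrow> hom1 ls (\<lambda>\<gamma> p. \<Sum>i\<in>S. f i \<gamma> p)"
  unfolding hom1_def by (auto intro!: in_eAe_sum)

context toupie
begin

abbreviation Cf :: "'k hom1 \<Rightarrow> nat \<Rightarrow> 'k" where
  "Cf f k \<equiv> \<Sum>h<ls ! k. cf f k h"

lemma hom1_first_arrow: "i < len \<Longrightarrow> hom1 ls (single (i, 0) (delta (Pth i 0 (Suc 0))))"
  using ls_pos[of i]
  by (intro hom1_single) (auto simp: arrows_iff in_eAe_def delta_apply intro: Pth_in_paths)

lemma branch_eAe: "q < len \<Longrightarrow> in_eAe ls Src Snk (branch ls q)"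
  using br_in_paths psrc_br ptgt_br by (auto simp: in_eAe_def branch_apply)

lemma hom1_W: "p < a \<Longrightarrow> q < len \<Longrightarrow> hom1 ls (single (p, 0) (branch ls q))"
  using ls_one[of p] len branch_eAe[of q]
  by (intro hom1_single) (auto simp: arrows_iff vtx_def)

lemma hom1_elem: "good j \<Longrightarrow> hom1 ls (elem ls j)"
proof (cases j)
  case (Yi i) assume "good j" then show ?thesis using Yi has_mon_len by (auto simp: good_def intro!: hom1_first_arrow)
next
  case (Ti K) assume "good j"
  then have K: "finite K" "K \<subseteq> V" using Ti finite_K CS_sub by (auto simp: good_def)
  then show ?thesis using Ti by (auto intro!: hom1_sum hom1_first_arrow simp: V_iff)
next
  case (Wi p q) assume "good j" then show ?thesis using Wi len by (auto simp: good_def intro!: hom1_W)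
next
  case (Zi p q) assume "good j" then show ?thesis using Zi len by (auto simp: good_def intro!: hom1_W)
next
  case (Xi j') assume "good j"
  then have "j' < a" "0 < a" using Xi by (auto simp: good_def)
  then show ?thesis using Xi len by (auto intro!: hom1_diff hom1_W)
qed

lemma D1_rho_hom:
  assumes "hom1 ls f" "s < nr"
  shows "D1 ls f (rho ls b s) = (\<lambda>q. \<Sum>k<len. b s k * Cf f k * branch ls k q)"
  unfolding D1_rho
proof (intro ext sum.cong refl)
  fix q k assume k: "k \<in> {..<len}"
  show "b s k * D1p ls f (br ls k) q = b s k * Cf f k * branch ls k q"
  proof (cases "b s k = 0")
    case False
    then have "a \<le> k" "2 \<le> ls ! k" using b_nz2[OF assms(2)] by auto
    then have "D1p ls f (br ls k) q = Cf f k * branch ls k q"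
      using D1p_formula[OF assms(1), of k 0 "ls ! k"] k by (simp add: atLeast0LessThan branch_def)
    then show ?thesis by simp
  qed simp
qed

lemma Cf_elem:
  assumes "good j" "a \<le> k" "k < len"
  shows "Cf (elem ls j) k = (if cov j k then 1 else 0)"
proof -
  have "Cf (elem ls j) k = (\<Sum>h<ls ! k. if h = 0 then (if cov j k then 1 else 0) else 0)"
    by (intro sum.cong) (auto simp: elem_br_arrow[OF assms(1,2)])
  then show ?thesis using ls_pos[OF assms(3)] by simp
qed

lemma ker_elem:
  assumes "good j"
  shows "kerD1 ls R (elem ls j)"
  unfolding kerD1_def
proof (intro conjI ballI)
  show hf: "hom1 ls (elem ls j)" using hom1_elem[OF assms] .
  fix r assume "r \<in> R"
  then show "inI ls R (D1 ls (elem ls j) r)"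
  proof (cases rule: rels_cases)
    case (mon i j' l')
    note m = monD[OF mon(1)]
    have "i < len" using m len by simp
    then have "Pth i j' l' \<in> paths ls" using m by (intro Pth_in_paths) auto
    then have "D1 ls (elem ls j) r = D1p ls (elem ls j) (Pth i j' l')" using mon by (simp add: D1_delta)
    also have "\<dots> = (\<lambda>q. (\<Sum>h\<in>{j'..<l'}. cf (elem ls j) i h) * delta (Pth i j' l') q)"
      using m \<open>i < len\<close> by (intro D1p_formula[OF hf]) auto
    finally show ?thesis using inI_smult[OF inI_mon[OF mon(1)]] by simp
  next
    case (rho s)
    have D: "D1 ls (elem ls j) r = (\<lambda>q. \<Sum>k<len. b s k * (if cov j k then 1 else 0) * branch ls k q)"
      unfolding rho(2) D1_rho_hom[OF hf rho(1)]
    proof (intro ext sum.cong refl)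
      fix q k assume "k \<in> {..<len}"
      show "b s k * Cf (elem ls j) k * branch ls k q = b s k * (if cov j k then 1 else 0) * branch ls k q"
        using Cf_elem[OF assms, of k] b_nz2[OF rho(1), of k] by (cases "b s k = 0") auto
    qed
    show ?thesis
    proof (cases "\<exists>k0. b s k0 \<noteq> 0 \<and> cov j k0")
      case True
      then obtain k0 where k0: "b s k0 \<noteq> 0" "cov j k0" by blast
      have all: "cov j k" if "b s k \<noteq> 0" for k
      proof (cases j)
        case (Yi i)
        then have "has_mon Mon k0" using k0 assms by (auto simp: good_def)
        then show ?thesis using b_nz2[OF rho(1) k0(1)] by simp
      next
        case (Ti K)
        then obtain i0 where i0: "i0 \<in> V" "K = E\<^sup>* `` {i0}" using assms by (auto simp: good_def CS_iff)
        have "(i0, k0) \<in> E\<^sup>*" using k0(2) Ti i0 by simp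
        moreover have "(k0, k) \<in> E" unfolding Erho_def using b_nz2[OF rho(1) k0(1)] b_nz2[OF rho(1) that] k0(1) that rho(1)
          by (auto simp: V_iff)
        ultimately have "(i0, k) \<in> E\<^sup>*" by (rule rtrancl_into_rtrancl)
        then show ?thesis using Ti i0 by simp
      qed (use k0 in auto)
      have "(\<lambda>q. \<Sum>k<len. b s k * (if cov j k then 1 else 0) * branch ls k q) = r"
        unfolding rho(2) rho_apply using all by (intro ext sum.cong refl) (case_tac "b s x = 0"; simp)
      then have "D1 ls (elem ls j) r = r" using D by simp
      then show ?thesis using inI_rho[OF rho(1)] rho(2) by simp
    next
      case False
      have "D1 ls (elem ls j) r = (\<lambda>q. 0)" unfolding D using False by (intro ext sum.neutral) auto
      then show ?thesis using inI_zero by simp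
    qed
  qed
qed

end



context toupie
begin

lemma idx_pos_good: "j \<in> idx_pos ls Mon nr b kp a \<Longrightarrow> good j"
  unfolding idx_pos_def good_def B0w_def by (auto simp: CS_iff)

lemma idx_zero_good: "j \<in> idx_zero ls Mon nr b \<Longrightarrow> good j"
  unfolding idx_zero_def good_def by (auto simp: CS_iff)

lemma finite_idx_pos: "finite (idx_pos ls Mon nr b kp a)"
proof -
  have W: "{Wi p q | p q. p \<noteq> q \<and> p < a \<and> q < a} \<subseteq> (\<lambda>(p,q). Wi p q) ` ({..<a} \<times> {..<a})" by auto
  have Z: "{Zi u s | u s. u < a \<and> s \<in> B0w ls Mon nr kp \<and> a \<le> s} \<subseteq> (\<lambda>(p,q). Zi p q) ` ({..<a} \<times> {..<len})"
    by (auto simp: B0w_def)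
  show ?thesis unfolding idx_pos_def
    using finite_subset[OF W] finite_subset[OF Z] finite_CS by auto
qed

lemma finite_idx_zero: "finite (idx_zero ls Mon nr b)"
  unfolding idx_zero_def using finite_CS by auto

lemma lincomb_branch:
  assumes "finite S" "\<And>j. j \<in> S \<Longrightarrow> good j" "a \<le> i" "i < len"
  shows "lincomb S c (elem ls) (i, h) p = (if h = 0 \<and> p = Pth i 0 1 then (if cel i \<in> S then c (cel i) else 0) else 0)"
proof -
  have "lincomb S c (elem ls) (i, h) p = (\<Sum>j\<in>S. if j = cel i then (if h = 0 \<and> p = Pth i 0 1 then c j else 0) else 0)"
    unfolding lincomb_def
    using assms by (intro sum.cong refl) (auto simp: elem_br_arrow cov_iff)
  also have "\<dots> = (if h = 0 \<and> p = Pth i 0 1 then (if cel i \<in> S then c (cel i) else 0) else 0)"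
    using assms(1) by (simp add: sum.delta')
  finally show ?thesis .
qed

lemma lincomb_first:
  assumes "\<And>j. j \<in> S \<Longrightarrow> good j" "u < a" "q < len"
  shows "lincomb S c (elem ls) (u, 0) (br ls q) = (\<Sum>j\<in>S. c j * ev j u q)"
  unfolding lincomb_def using assms by (intro sum.cong refl) (simp add: elem_first_br)

lemma vtx0: "vtx ls i 0 = Src" by (simp add: vtx_def)
lemma vtxL: "i < len \<Longrightarrow> vtx ls i (ls ! i) = Snk" using ls_pos by (auto simp: vtx_def)

lemma indep_branch:
  assumes g: "hom0 ls g" and eq: "equivA ls R (lincomb S c (elem ls)) (D0 ls g)"
    and S: "finite S" "\<And>j. j \<in> S \<Longrightarrow> good j" and i: "a \<le> i" "i < len"
  shows "(if cel i \<in> S then c (cel i) else 0) = g Snk (Triv Snk) - g Src (Triv Src)"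
proof -
  let ?X = "if cel i \<in> S then c (cel i) else 0"
  let ?G = "\<lambda>j. g (vtx ls i j) (Triv (vtx ls i j))"
  have step: "(if h = 0 then ?X else 0) = ?G (Suc h) - ?G h" if h: "h < ls ! i" for h
  proof -
    have "(i, h) \<in> arrows ls" using h i by (simp add: arrows_iff)
    then have "inI ls R (\<lambda>p. lincomb S c (elem ls) (i, h) p - D0 ls g (i, h) p)"
      using eq unfolding equivA_def by blast
    then have "lincomb S c (elem ls) (i, h) (Pth i h (Suc h)) - D0 ls g (i, h) (Pth i h (Suc h)) = 0"
      using I_char by blast
    then show ?thesis
      using lincomb_branch[OF S i, of c h "Pth i h (Suc h)"] D0_val[OF g i(2) h]
      by (auto simp: delta_apply split: if_splits)
  qed
  have "(\<Sum>h<ls ! i. (if h = 0 then ?X else 0)) = (\<Sum>h<ls ! i. ?G (Suc h) - ?G h)"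
    using step by (intro sum.cong) auto
  also have "\<dots> = ?G (ls ! i) - ?G 0" by (rule sum_lessThan_telescope)
  finally show ?thesis using ls_pos[OF i(2)] vtx0 vtxL[OF i(2)] by simp
qed

lemma indep_first:
  assumes g: "hom0 ls g" and eq: "equivA ls R (lincomb S c (elem ls)) (D0 ls g)"
    and S: "\<And>j. j \<in> S \<Longrightarrow> good j" and u: "u < a"
  defines "e \<equiv> g Snk (Triv Snk) - g Src (Triv Src)"
  shows "\<exists>lam. (\<forall>q<a. (\<Sum>j\<in>S. c j * ev j u q) = (if q = u then e else 0)) \<and>
     (\<forall>q<len. \<not> has_mon Mon q \<longrightarrow> (\<Sum>j\<in>S. c j * ev j u q) - (if q = u then e else 0) = (\<Sum>t<nr. lam t * b t q))"
proof -
  have ul: "u < len" "ls ! u = 1" using u len ls_one by auto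
  have "(u, 0) \<in> arrows ls" using ul by (simp add: arrows_iff)
  then have I: "inI ls R (\<lambda>p. lincomb S c (elem ls) (u, 0) p - D0 ls g (u, 0) p)"
    using eq unfolding equivA_def by blast
  have D0u: "D0 ls g (u, 0) (br ls q) = (if q = u then e else 0)" if "q < len" for q
  proof -
    have "vtx ls u (Suc 0) = Snk" using ul by (simp add: vtx_def)
    then show ?thesis using D0_val[OF g ul(1), of 0] ul ls_one[of q] that
      by (auto simp: delta_apply vtx0 e_def)
  qed
  have val: "lincomb S c (elem ls) (u, 0) (br ls q) - D0 ls g (u, 0) (br ls q)
      = (\<Sum>j\<in>S. c j * ev j u q) - (if q = u then e else 0)" if "q < len" for q
    using lincomb_first[OF S u that] D0u[OF that] by simp
  from I_char[OF I] obtain lam where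
    A: "\<forall>i j. lincomb S c (elem ls) (u, 0) (Pth i j (Suc j)) - D0 ls g (u, 0) (Pth i j (Suc j)) = 0" and
    B: "\<forall>i<len. \<not> has_mon Mon i \<longrightarrow> lincomb S c (elem ls) (u, 0) (br ls i) - D0 ls g (u, 0) (br ls i) = (\<Sum>s<nr. lam s * b s i)"
    by blast
  have "\<forall>q<a. (\<Sum>j\<in>S. c j * ev j u q) = (if q = u then e else 0)"
  proof (intro allI impI)
    fix q assume q: "q < a"
    then have "q < len" "br ls q = Pth q 0 (Suc 0)" using len ls_one by auto
    then show "(\<Sum>j\<in>S. c j * ev j u q) = (if q = u then e else 0)" using A val[of q] by simp
  qed
  moreover have "\<forall>q<len. \<not> has_mon Mon q \<longrightarrow> (\<Sum>j\<in>S. c j * ev j u q) - (if q = u then e else 0) = (\<Sum>t<nr. lam t * b t q)"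
    using B val by simp
  ultimately show ?thesis by blast
qed

end



context toupie
begin

abbreviation "Spos \<equiv> idx_pos ls Mon nr b kp a"
abbreviation "Szero \<equiv> idx_zero ls Mon nr b"

lemma Zi_pos: "Zi p s \<in> Spos \<Longrightarrow> s \<in> B0w ls Mon nr kp \<and> a \<le> s \<and> p < a"
  unfolding idx_pos_def by auto

lemma cel_pos: "a \<le> i \<Longrightarrow> i < len \<Longrightarrow> cel i \<in> Spos"
  using V_iff2[of i] unfolding idx_pos_def cel_def comps_def by auto

lemma cel_of_good:
  assumes "good j" "(\<exists>i. j = Yi i) \<or> (\<exists>K. j = Ti K)"
  shows "\<exists>i. a \<le> i \<and> i < len \<and> j = cel i"
proof (cases j)
  case (Yi i')
  then show ?thesis using assms has_mon_len[of i'] by (auto simp: good_def cel_def)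
next
  case (Ti K)
  then obtain i0 where i0: "i0 \<in> V" "K = E\<^sup>* `` {i0}" using assms by (auto simp: good_def CS_iff)
  then have "a \<le> i0" "i0 < len" "\<not> has_mon Mon i0" using V_ge V_iff by auto
  then show ?thesis using Ti i0 by (auto simp: cel_def)
qed (use assms in auto)

lemma pivsum: "t < nr \<Longrightarrow> (\<Sum>t'<nr. lam t' * b t' (kp t)) = lam t"
proof -
  assume t: "t < nr"
  have "(\<Sum>t'<nr. lam t' * b t' (kp t)) = (\<Sum>t'<nr. if t' = t then lam t' else 0)"
    using piv pivcol t by (intro sum.cong) auto
  then show ?thesis using t by simp
qed

lemma indep_pos:
  assumes a: "0 < a" and g: "hom0 ls g" and eq: "equivA ls R (lincomb Spos c (elem ls)) (D0 ls g)"
  shows "\<forall>j\<in>Spos. c j = 0"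
proof -
  let ?e = "g Snk (Triv Snk) - g Src (Triv Src)"
  have S: "\<And>j. j \<in> Spos \<Longrightarrow> good j" using idx_pos_good by blast
  have fS: "finite Spos" by (rule finite_idx_pos)
  have W: "c (Wi u q) = 0" if uq: "u < a" "q < a" "q \<noteq> u" for u q
  proof -
    obtain lam where L: "\<forall>q<a. (\<Sum>j\<in>Spos. c j * ev j u q) = (if q = u then ?e else 0)"
      using indep_first[OF g eq S uq(1)] by blast
    have "(\<Sum>j\<in>Spos. c j * ev j u q) = c (Wi u q)"
    proof (rule sum_pick[OF fS])
      show "Wi u q \<in> Spos" using uq unfolding idx_pos_def by auto
      fix j assume "j \<in> Spos"
      then have "good j" by (rule S)
      then show "ev j u q = (if j = Wi u q then 1 else 0)" using uq
        by (cases j) (auto simp: good_def)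
    qed
    then show ?thesis using L uq by simp
  qed
  have LZ: "(\<forall>s. Zi u s \<in> Spos \<longrightarrow> c (Zi u s) = 0) \<and> (\<Sum>j\<in>Spos. c j * ev j u u) = ?e" if u: "u < a" for u
  proof -
    obtain lam where L1: "\<forall>q<a. (\<Sum>j\<in>Spos. c j * ev j u q) = (if q = u then ?e else 0)"
      and L2: "\<forall>q<len. \<not> has_mon Mon q \<longrightarrow> (\<Sum>j\<in>Spos. c j * ev j u q) - (if q = u then ?e else 0) = (\<Sum>t<nr. lam t * b t q)"
      using indep_first[OF g eq S u] by blast
    have lam0: "lam t = 0" if t: "t < nr" for t
    proof -
      have kt: "a \<le> kp t" "kp t < len" "\<not> has_mon Mon (kp t)" using kp_range[OF t] b_nz2[OF t, of "kp t"] piv[OF t] by auto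
      have "(\<Sum>j\<in>Spos. c j * ev j u (kp t)) = 0"
      proof (intro sum_zero)
        fix j assume j: "j \<in> Spos"
        show "ev j u (kp t) = 0"
        proof (cases j)
          case (Zi p s)
          then have "s \<noteq> kp t" using Zi_pos j t unfolding B0w_def by auto
          then show ?thesis using Zi by simp
        qed (use kt u a S[OF j] in \<open>auto simp: good_def\<close>)
      qed
      then show ?thesis using L2 kt u pivsum[OF t, of lam] by auto
    qed
    have Z: "c (Zi u s) = 0" if True: "Zi u s \<in> Spos" for s
    proof -
      from True have s: "s \<in> B0w ls Mon nr kp" "a \<le> s" using Zi_pos by auto
      then have sl: "s < len" "\<not> has_mon Mon s" unfolding B0w_def by auto
      have "(\<Sum>j\<in>Spos. c j * ev j u s) = c (Zi u s)"
      proof (rule sum_pick[OF fS True])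
        fix j assume "j \<in> Spos"
        then have "good j" by (rule S)
        then show "ev j u s = (if j = Zi u s then 1 else 0)" using s u
          by (cases j) (auto simp: good_def)
      qed
      moreover have "(\<Sum>t<nr. lam t * b t s) = 0" using lam0 by simp
      ultimately show ?thesis using L2 sl s u by auto
    qed
    show ?thesis using Z L1 u by simp
  qed
  have X1: "c (Xi u) = ?e" if u: "1 \<le> u" "u < a" for u
  proof -
    have "(\<Sum>j\<in>Spos. c j * ev j u u) = c (Xi u)"
    proof (rule sum_pick[OF fS])
      show "Xi u \<in> Spos" using u unfolding idx_pos_def by auto
      fix j assume "j \<in> Spos"
      then have "good j" by (rule S)
      then show "ev j u u = (if j = Xi u then 1 else 0)" using u
        by (cases j) (auto simp: good_def)
    qed
    then show ?thesis using LZ[of u] u by simp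
  qed
  have "(\<Sum>j\<in>Spos. c j * ev j 0 0) = (\<Sum>j\<in>Spos. if j \<in> Xi ` {1..<a} then - c j else 0)"
  proof (intro sum.cong refl)
    fix j assume "j \<in> Spos"
    then have "good j" by (rule S)
    then show "c j * ev j 0 0 = (if j \<in> Xi ` {1..<a} then - c j else 0)"
      by (cases j) (auto simp: good_def)
  qed
  also have "\<dots> = (\<Sum>j\<in>Spos \<inter> Xi ` {1..<a}. - c j)"
    using fS by (simp add: sum.inter_restrict)
  also have "Spos \<inter> Xi ` {1..<a} = Xi ` {1..<a}" unfolding idx_pos_def by auto
  also have "(\<Sum>j\<in>Xi ` {1..<a}. - c j) = (\<Sum>j'\<in>{1..<a}. - c (Xi j'))"
    by (simp add: sum.reindex inj_on_def)
  also have "\<dots> = (\<Sum>j'\<in>{1..<a}. - ?e)" using X1 by (intro sum.cong) auto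
  also have "\<dots> = - (of_nat (a - 1) * ?e)" by (simp add: algebra_simps)
  finally have "- (of_nat (a - 1) * ?e) = ?e" using LZ[OF a] by simp
  then have "(of_nat (a - 1) + 1) * ?e = 0" by (simp add: algebra_simps)
  moreover have "(of_nat (a - 1) + 1 :: 'k) = of_nat a" using a by (simp add: of_nat_diff)
  ultimately have "of_nat a * ?e = 0" by simp
  then have e0: "?e = 0" using a by simp
  show ?thesis
  proof
    fix j assume j: "j \<in> Spos"
    then have gj: "good j" by (rule S)
    show "c j = 0"
    proof (cases j)
      case (Wi p q) then show ?thesis using W gj by (auto simp: good_def)
    next
      case (Zi p q) then show ?thesis using LZ j Zi_pos by blast
    next
      case (Xi p) then show ?thesis using X1 gj e0 by (auto simp: good_def)
    next
      case (Yi i)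
      then have "(\<exists>i. j = Yi i) \<or> (\<exists>K. j = Ti K)" by blast
      from cel_of_good[OF gj this] obtain i' where "a \<le> i'" "i' < len" "j = cel i'" by blast
      then show ?thesis using indep_branch[OF g eq fS S, of i'] cel_pos e0 by simp
    next
      case (Ti K)
      then have "(\<exists>i. j = Yi i) \<or> (\<exists>K. j = Ti K)" by blast
      from cel_of_good[OF gj this] obtain i' where "a \<le> i'" "i' < len" "j = cel i'" by blast
      then show ?thesis using indep_branch[OF g eq fS S, of i'] cel_pos e0 by simp
    qed
  qed
qed

lemma hasB_cel: "i < len \<Longrightarrow> hasB ls (cel (len - 1))"
  by (auto simp: cel_def)

lemma indep_zero:
  assumes a: "a = 0" and g: "hom0 ls g" and eq: "equivA ls R (lincomb Szero c (elem ls)) (D0 ls g)"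
  shows "\<forall>j\<in>Szero. c j = 0"
proof -
  let ?e = "g Snk (Triv Snk) - g Src (Triv Src)"
  have S: "\<And>j. j \<in> Szero \<Longrightarrow> good j" using idx_zero_good by blast
  have fS: "finite Szero" by (rule finite_idx_zero)
  have Bl: "len - 1 < len" using len_pos by simp
  have "cel (len - 1) \<notin> Szero" unfolding idx_zero_def using hasB_cel[OF Bl] by simp
  then have e0: "?e = 0" using indep_branch[OF g eq fS S _ Bl] a by simp
  show ?thesis
  proof
    fix j assume j: "j \<in> Szero"
    then have gj: "good j" by (rule S)
    have "(\<exists>i. j = Yi i) \<or> (\<exists>K. j = Ti K)"
      using j unfolding idx_zero_def by auto
    from cel_of_good[OF gj this] obtain i' where "a \<le> i'" "i' < len" "j = cel i'" by blast
    then show "c j = 0" using indep_branch[OF g eq fS S, of i'] j e0 by simp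
  qed
qed

end



context toupie
begin

lemma inI_br_mon:
  assumes "has_mon Mon q"
  shows "inI ls R (branch ls q)"
proof -
  obtain j l' where m: "(q, j, l') \<in> Mon" using assms unfolding has_mon_def by blast
  note mm = monD[OF m]
  have ql: "q < len" using has_mon_len[OF assms] by simp
  have sp1: "sp ls q 0 j \<in> paths ls" using mm ql by (intro sp_paths) auto
  have sp2: "sp ls q l' (ls ! q) \<in> paths ls" using mm ql by (intro sp_paths) auto
  have P: "Pth q j l' \<in> paths ls" using mm ql by (intro Pth_in_paths) auto
  have P2: "Pth q 0 l' \<in> paths ls" using mm ql by (intro Pth_in_paths) auto
  have c1: "pcat ls (sp ls q 0 j) (Pth q j l') = Some (Pth q 0 l')" by (auto simp: sp_def vtx_def)
  have c2: "pcat ls (Pth q 0 l') (sp ls q l' (ls ! q)) = Some (Pth q 0 (ls ! q))" by (auto simp: sp_def)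
  have mem: "delta (Pth q j l') \<in> R" unfolding rels_def using m by (auto intro!: rev_image_eqI[where x="(q,j,l')"])
  have "mul ls (mul ls (delta (sp ls q 0 j)) (delta (Pth q j l'))) (delta (sp ls q l' (ls ! q))) = (branch ls q :: 'k kq)"
    by (simp add: mul_dd_Some[OF sp1 P c1] mul_dd_Some[OF P2 sp2 c2] branch_def)
  then show ?thesis using inI_gen[OF finite_R mem sp1 sp2] by simp
qed

lemma branch_br: "k < len \<Longrightarrow> i < len \<Longrightarrow> branch ls k (br ls i) = (if k = i then 1 else 0)"
  by (auto simp: branch_apply)

context
  fixes f :: "'k hom1"
  assumes kf: "kerD1 ls R f"
begin

lemma hf: "hom1 ls f" using kf unfolding kerD1_def by blast

lemma C_rel:
  assumes s: "s < nr" and bi: "b s i \<noteq> 0"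
  shows "Cf f i = Cf f (kp s)"
proof -
  have "rho ls b s \<in> R" using s unfolding rels_def by auto
  then have "inI ls R (D1 ls f (rho ls b s))" using kf unfolding kerD1_def by blast
  then have I: "inI ls R (\<lambda>q. \<Sum>k<len. b s k * Cf f k * branch ls k q)" using D1_rho_hom[OF hf s] by simp
  from I_char[OF I] obtain lam where
    L: "\<forall>i<len. \<not> has_mon Mon i \<longrightarrow> (\<Sum>k<len. b s k * Cf f k * branch ls k (br ls i)) = (\<Sum>t<nr. lam t * b t i)"
    by blast
  have ev: "(\<Sum>k<len. b s k * Cf f k * branch ls k (br ls i)) = b s i * Cf f i" if "i < len" for i
  proof -
    have "(\<Sum>k<len. b s k * Cf f k * branch ls k (br ls i)) = (\<Sum>k<len. if k = i then b s k * Cf f k else 0)"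
      using that by (intro sum.cong) (auto simp: branch_br)
    then show ?thesis using that by simp
  qed
  have lam: "lam t = (if t = s then Cf f (kp s) else 0)" if t: "t < nr" for t
  proof -
    have "\<not> has_mon Mon (kp t)" "kp t < len" using kp_range[OF t] b_nz2[OF t, of "kp t"] piv[OF t] by auto
    then have "b s (kp t) * Cf f (kp t) = lam t" using L ev pivsum[OF t, of lam] by auto
    then show ?thesis using piv pivcol[OF t s] s by (cases "t = s") auto
  qed
  have il: "i < len" "\<not> has_mon Mon i" using b_nz2[OF s bi] by auto
  have "b s i * Cf f i = (\<Sum>t<nr. lam t * b t i)" using L ev il by auto
  also have "\<dots> = (\<Sum>t<nr. if t = s then Cf f (kp s) * b t i else 0)" using lam by (intro sum.cong) auto
  also have "\<dots> = Cf f (kp s) * b s i" using s by simp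
  finally show ?thesis using bi by (simp add: mult.commute)
qed

lemma C_comp: "(i, k) \<in> E\<^sup>* \<Longrightarrow> Cf f i = Cf f k"
proof (induction rule: rtrancl_induct)
  case (step y z)
  then obtain s where s: "s < nr" "b s y \<noteq> 0" "b s z \<noteq> 0" unfolding Erho_def by blast
  have "Cf f y = Cf f (kp s)" by (rule C_rel[OF s(1,2)])
  moreover have "Cf f z = Cf f (kp s)" by (rule C_rel[OF s(1,3)])
  ultimately show ?case using step.IH by simp
qed simp

definition "dd p q = f (p, 0) (br ls q)"
definition "ee = (if 0 < a then (\<Sum>p<a. dd p p) / of_nat a else Cf f (len - 1))"
definition "cc j = (case j of Yi i \<Rightarrow> Cf f i - ee | Ti K \<Rightarrow> Cf f (SOME i. i \<in> K) - ee
   | Wi p q \<Rightarrow> dd p q | Zi u s \<Rightarrow> dd u s - (\<Sum>t<nr. dd u (kp t) * b t s) | Xi j \<Rightarrow> dd j j - ee)"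
definition "gam x = (case x of Src \<Rightarrow> 0 | Snk \<Rightarrow> ee | Mid i j \<Rightarrow> (\<Sum>h<j. cf f i h) - (Cf f i - ee))"
definition "gg x = (if x \<in> verts ls then (\<lambda>p. gam x * delta (Triv x) p) else (\<lambda>p. 0))"

lemma cc_cel: "a \<le> i \<Longrightarrow> i < len \<Longrightarrow> cc (cel i) = Cf f i - ee"
proof -
  assume i: "a \<le> i" "i < len"
  show ?thesis
  proof (cases "has_mon Mon i")
    case True then show ?thesis by (simp add: cel_def cc_def)
  next
    case False
    have "i \<in> E\<^sup>* `` {i}" by simp
    then have "(SOME k. k \<in> E\<^sup>* `` {i}) \<in> E\<^sup>* `` {i}" by (rule someI)
    then have "(i, SOME k. k \<in> E\<^sup>* `` {i}) \<in> E\<^sup>*" by simp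
    then have "Cf f (SOME k. k \<in> E\<^sup>* `` {i}) = Cf f i" using C_comp by simp
    then show ?thesis using False by (simp add: cel_def cc_def)
  qed
qed

lemma hom0_gg: "hom0 ls gg"
  unfolding hom0_def gg_def by (auto simp: in_eAe_def delta_apply Triv_in_paths)

lemma gg_val: "x \<in> verts ls \<Longrightarrow> gg x (Triv x) = gam x"
  by (simp add: gg_def delta_apply)

lemma gam_vtx:
  assumes "a \<le> i" "i < len" "j \<le> ls ! i"
  shows "gam (vtx ls i j) = (\<Sum>h<j. cf f i h) - (if j = 0 then 0 else Cf f i - ee)"
  using assms ls_pos[OF assms(2)] by (auto simp: vtx_def gam_def)

lemma D0_gg:
  assumes "a \<le> i" "i < len" "h < ls ! i"
  shows "D0 ls gg (i, h) p = (cf f i h - (if h = 0 then Cf f i - ee else 0)) * delta (Pth i h (Suc h)) p"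
proof -
  have v: "vtx ls i (Suc h) \<in> verts ls" "vtx ls i h \<in> verts ls" using assms by (auto intro!: vtx_in_verts)
  have g1: "gam (vtx ls i (Suc h)) = (\<Sum>h'<h. cf f i h') + cf f i h - (Cf f i - ee)"
    using gam_vtx[OF assms(1,2), of "Suc h"] assms(3) by simp
  have g0: "gam (vtx ls i h) = (\<Sum>h'<h. cf f i h') - (if h = 0 then 0 else Cf f i - ee)"
    using gam_vtx[OF assms(1,2), of h] assms(3) by simp
  have "gam (vtx ls i (Suc h)) - gam (vtx ls i h) = cf f i h - (if h = 0 then Cf f i - ee else 0)"
    unfolding g1 g0 by (cases "h = 0") (simp_all add: algebra_simps)
  then show ?thesis
    unfolding D0_val[OF hom0_gg assms(2,3)] gg_val[OF v(1)] gg_val[OF v(2)] by simp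
qed

lemma span_branch:
  assumes S: "finite S" "\<And>j. j \<in> S \<Longrightarrow> good j"
    and cov: "\<And>i. a \<le> i \<Longrightarrow> i < len \<Longrightarrow> (if cel i \<in> S then cc (cel i) else 0) = Cf f i - ee"
    and i: "a \<le> i" "i < len" "h < ls ! i"
  shows "inI ls R (\<lambda>p. f (i, h) p - (lincomb S cc (elem ls) (i, h) p + D0 ls gg (i, h) p))"
proof -
  have "(\<lambda>p. f (i, h) p - (lincomb S cc (elem ls) (i, h) p + D0 ls gg (i, h) p)) = (\<lambda>p. 0)"
  proof
    fix p
    have F: "f (i, h) p = cf f i h * delta (Pth i h (Suc h)) p"
      by (subst hom1_arrow[OF hf i]) simp
    have L: "lincomb S cc (elem ls) (i, h) p = (if h = 0 \<and> p = Pth i 0 1 then Cf f i - ee else 0)"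
      using lincomb_branch[OF S i(1,2), of cc h p] cov[OF i(1,2)] by simp
    show "f (i, h) p - (lincomb S cc (elem ls) (i, h) p + D0 ls gg (i, h) p) = 0"
      unfolding F L D0_gg[OF i] by (cases "h = 0"; cases "p = Pth i h (Suc h)") (simp_all add: delta_apply)
  qed
  then show ?thesis using inI_zero by simp
qed


definition "EE u q = (if has_mon Mon q then dd u q else 0) + (\<Sum>t<nr. dd u (kp t) * b t q)"

lemma first_coef:
  assumes a: "0 < a" and u: "u < a" and q: "q < len"
  shows "dd u q - ((\<Sum>j\<in>Spos. cc j * ev j u q) + (if q = u then ee else 0)) = EE u q"
proof -
  have S: "\<And>j. j \<in> Spos \<Longrightarrow> good j" using idx_pos_good by blast
  have fS: "finite Spos" by (rule finite_idx_pos)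
  have lowEE: "EE u q = 0" if "q < a"
  proof -
    have "\<not> has_mon Mon q" using that has_mon_len by fastforce
    moreover have "\<forall>t<nr. b t q = 0" using that bz by simp
    ultimately show ?thesis by (simp add: EE_def)
  qed
  show ?thesis
  proof (cases "q < a")
    case True
    show ?thesis
    proof (cases "q = u")
      case False
      have "(\<Sum>j\<in>Spos. cc j * ev j u q) = cc (Wi u q)"
      proof (rule sum_pick[OF fS])
        show "Wi u q \<in> Spos" using True u False unfolding idx_pos_def by auto
        fix j assume "j \<in> Spos"
        then have "good j" by (rule S)
        then show "ev j u q = (if j = Wi u q then 1 else 0)" using True u False
          by (cases j) (auto simp: good_def)
      qed
      then show ?thesis using lowEE[OF True] False by (simp add: cc_def)
    next
      case qu: True
      have "(\<Sum>j\<in>Spos. cc j * ev j u u) = dd u u - ee"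
      proof (cases "u = 0")
        case False
        have "(\<Sum>j\<in>Spos. cc j * ev j u u) = cc (Xi u)"
        proof (rule sum_pick[OF fS])
          show "Xi u \<in> Spos" using u False unfolding idx_pos_def by auto
          fix j assume "j \<in> Spos"
          then have "good j" by (rule S)
          then show "ev j u u = (if j = Xi u then 1 else 0)" using u False
            by (cases j) (auto simp: good_def)
        qed
        then show ?thesis by (simp add: cc_def)
      next
        case u0: True
        have "(\<Sum>j\<in>Spos. cc j * ev j 0 0) = (\<Sum>j\<in>Spos. if j \<in> Xi ` {1..<a} then - cc j else 0)"
        proof (intro sum.cong refl)
          fix j assume "j \<in> Spos"
          then have "good j" by (rule S)
          then show "cc j * ev j 0 0 = (if j \<in> Xi ` {1..<a} then - cc j else 0)"
            by (cases j) (auto simp: good_def)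
        qed
        also have "\<dots> = (\<Sum>j\<in>Spos \<inter> Xi ` {1..<a}. - cc j)"
          using fS by (simp add: sum.inter_restrict)
        also have "Spos \<inter> Xi ` {1..<a} = Xi ` {1..<a}" unfolding idx_pos_def by auto
        also have "(\<Sum>j\<in>Xi ` {1..<a}. - cc j) = (\<Sum>j'\<in>{1..<a}. - (dd j' j' - ee))"
          by (simp add: sum.reindex inj_on_def cc_def)
        also have "\<dots> = of_nat (a - 1) * ee - (\<Sum>j'\<in>{1..<a}. dd j' j')"
          by (simp add: sum_subtractf sum_negf algebra_simps)
        also have "\<dots> = dd 0 0 - ee"
        proof -
          have "{..<a} = insert 0 {1..<a}" using a by auto
          then have sm: "(\<Sum>p<a. dd p p) = dd 0 0 + (\<Sum>j'\<in>{1..<a}. dd j' j')" by simp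
          have "of_nat a * ee = (\<Sum>p<a. dd p p)" using a by (simp add: ee_def)
          then have h1: "(\<Sum>j'\<in>{1..<a}. dd j' j') = of_nat a * ee - dd 0 0" using sm by simp
          have h2: "(of_nat (a - 1) :: 'k) = of_nat a - 1" using a by (simp add: of_nat_diff)
          show ?thesis unfolding h1 h2 by (simp add: algebra_simps)
        qed
        finally show ?thesis using u0 by simp
      qed
      then show ?thesis using lowEE[OF True] qu by simp
    qed
  next
    case False
    then have qa: "a \<le> q" by simp
    have "(\<Sum>j\<in>Spos. cc j * ev j u q) = (\<Sum>j\<in>Spos. if j = Zi u q then cc j else 0)"
    proof (intro sum.cong refl)
      fix j assume "j \<in> Spos"
      then have "good j" by (rule S)
      then show "cc j * ev j u q = (if j = Zi u q then cc j else 0)" using qa u a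
        by (cases j) (auto simp: good_def)
    qed
    also have "\<dots> = (if Zi u q \<in> Spos then cc (Zi u q) else 0)" using fS by (simp add: sum.delta')
    finally have L: "(\<Sum>j\<in>Spos. cc j * ev j u q) = (if Zi u q \<in> Spos then cc (Zi u q) else 0)" .
    have mem: "Zi u q \<in> Spos \<longleftrightarrow> q \<in> B0w ls Mon nr kp" using u qa unfolding idx_pos_def by auto
    have qu: "q \<noteq> u" using qa u by simp
    show ?thesis
    proof (cases "has_mon Mon q")
      case True
      then have "q \<notin> B0w ls Mon nr kp" by (simp add: B0w_def)
      moreover have "\<forall>t<nr. b t q = 0" using b_nz2 True by blast
      ultimately show ?thesis using L mem qu True by (simp add: EE_def)
    next
      case nm: False
      show ?thesis
      proof (cases "q \<in> kp ` {..<nr}")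
        case True
        then obtain t0 where t0: "t0 < nr" "q = kp t0" by auto
        then have "q \<notin> B0w ls Mon nr kp" by (simp add: B0w_def)
        moreover have "(\<Sum>t<nr. dd u (kp t) * b t q) = dd u q" using pivsum[OF t0(1), of "\<lambda>t. dd u (kp t)"] t0 by simp
        ultimately show ?thesis using L mem qu nm by (simp add: EE_def)
      next
        case False
        then have "q \<in> B0w ls Mon nr kp" using q nm by (simp add: B0w_def)
        then show ?thesis using L mem qu nm by (simp add: EE_def cc_def)
      qed
    qed
  qed
qed


lemma inI_EE: "inI ls R (\<lambda>x. \<Sum>q<len. EE u q * branch ls q x)"
proof -
  have eq: "(\<lambda>x. \<Sum>q<len. EE u q * branch ls q x) =
     (\<lambda>x. (\<Sum>q<len. (if has_mon Mon q then dd u q else 0) * branch ls q x) + (\<Sum>t<nr. dd u (kp t) * rho ls b t x))"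
  proof
    fix x
    have "(\<Sum>q<len. (\<Sum>t<nr. dd u (kp t) * b t q) * branch ls q x) = (\<Sum>t<nr. dd u (kp t) * rho ls b t x)"
      unfolding rho_apply by (simp add: sum_distrib_right sum_distrib_left sum.swap[where A="{..<len}"] mult.assoc)
    then show "(\<Sum>q<len. EE u q * branch ls q x) =
      (\<Sum>q<len. (if has_mon Mon q then dd u q else 0) * branch ls q x) + (\<Sum>t<nr. dd u (kp t) * rho ls b t x)"
      unfolding EE_def by (simp add: distrib_right sum.distrib)
  qed
  have A: "inI ls R (\<lambda>x. (if has_mon Mon q then dd u q else 0) * branch ls q x)" for q
  proof (cases "has_mon Mon q")
    case True then show ?thesis using inI_smult[OF inI_br_mon[OF True]] by simp
  next
    case False then show ?thesis using inI_zero by simp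
  qed
  have B: "inI ls R (\<lambda>x. dd u (kp t) * rho ls b t x)" if "t \<in> {..<nr}" for t
    using inI_smult[OF inI_rho] that by simp
  show ?thesis unfolding eq
    by (intro inI_add inI_sum A B) auto
qed

lemma span_first:
  assumes a: "0 < a" and u: "u < a"
  shows "inI ls R (\<lambda>x. f (u, 0) x - (lincomb Spos cc (elem ls) (u, 0) x + D0 ls gg (u, 0) x))"
proof -
  have S: "\<And>j. j \<in> Spos \<Longrightarrow> good j" using idx_pos_good by blast
  have ul: "u < len" "ls ! u = 1" using u len ls_one by auto
  have D0u: "D0 ls gg (u, 0) x = ee * delta (br ls u) x" for x
  proof -
    have v: "vtx ls u (Suc 0) = Snk" "vtx ls u 0 = Src" using ul by (auto simp: vtx_def)
    have u0: "0 < ls ! u" using ul by simp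
    show ?thesis
      unfolding D0_val[OF hom0_gg ul(1) u0] using ul(2) v gg_val[OF Snk_verts] gg_val[OF Src_verts]
      by (simp add: gam_def)
  qed
  have "(\<lambda>x. f (u, 0) x - (lincomb Spos cc (elem ls) (u, 0) x + D0 ls gg (u, 0) x)) = (\<lambda>x. \<Sum>q<len. EE u q * branch ls q x)"
  proof
    fix x
    show "f (u, 0) x - (lincomb Spos cc (elem ls) (u, 0) x + D0 ls gg (u, 0) x) = (\<Sum>q<len. EE u q * branch ls q x)"
    proof (cases "\<exists>q<len. x = br ls q")
      case True
      then obtain q where q: "q < len" "x = br ls q" by blast
      have R: "(\<Sum>q'<len. EE u q' * branch ls q' x) = EE u q"
      proof -
        have "(\<Sum>q'<len. EE u q' * branch ls q' x) = (\<Sum>q'<len. if q' = q then EE u q' else 0)"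
          using q by (intro sum.cong) (auto simp: branch_br)
        then show ?thesis using q by simp
      qed
      have D: "D0 ls gg (u, 0) x = (if q = u then ee else 0)"
        unfolding D0u using q ul by (auto simp: delta_apply)
      show ?thesis unfolding R D using first_coef[OF a u q(1)] lincomb_first[OF S u q(1), where c=cc] q
        by (simp add: dd_def)
    next
      case False
      have F: "f (u, 0) x = 0" by (subst hom1_first[OF hf u]) (use False in \<open>auto simp: branch_apply intro!: sum.neutral\<close>)
      have L: "lincomb Spos cc (elem ls) (u, 0) x = 0"
        unfolding lincomb_def using False by (auto intro!: sum.neutral simp: elem_first_nonbr[OF S u])
      have D: "D0 ls gg (u, 0) x = 0" unfolding D0u using False ul by (auto simp: delta_apply)
      have R: "(\<Sum>q<len. EE u q * branch ls q x) = 0" using False by (auto simp: branch_apply intro!: sum.neutral)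
      show ?thesis using F L D R by simp
    qed
  qed
  then show ?thesis using inI_EE by simp
qed


lemma hasB_cov: "hasB ls j \<Longrightarrow> j = cel i \<Longrightarrow> cov j (len - 1)"
  by (auto simp: cel_def split: if_splits)

lemma cov_pos: "a \<le> i \<Longrightarrow> i < len \<Longrightarrow> (if cel i \<in> Spos then cc (cel i) else 0) = Cf f i - ee"
  using cel_pos cc_cel by simp

lemma cov_zero:
  assumes a: "a = 0" and i: "a \<le> i" "i < len"
  shows "(if cel i \<in> Szero then cc (cel i) else 0) = Cf f i - ee"
proof (cases "cel i \<in> Szero")
  case True then show ?thesis using cc_cel[OF i] by simp
next
  case False
  have base: "cel i \<in> Yi ` {i. i < len \<and> has_mon Mon i} \<union> Ti ` CS"
  proof (cases "has_mon Mon i")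
    case True then show ?thesis using i by (simp add: cel_def)
  next
    case False
    then have "i \<in> V" using V_iff2[OF i] by simp
    then have "E\<^sup>* `` {i} \<in> CS" unfolding CS_iff by blast
    then show ?thesis using False by (simp add: cel_def)
  qed
  then have "hasB ls (cel i)" using False unfolding idx_zero_def by blast
  then have "cov (cel i) (len - 1)" by (rule hasB_cov) simp
  moreover have Bl: "a \<le> len - 1" "len - 1 < len" using a len_pos by auto
  ultimately have "cel i = cel (len - 1)" using cov_iff cel_good[OF i] by blast
  then have "Cf f i - ee = Cf f (len - 1) - ee" using cc_cel[OF i] cc_cel[OF Bl] by simp
  moreover have "ee = Cf f (len - 1)" using a unfolding ee_def by simp
  ultimately show ?thesis using False by simp
qed

lemma span_pos:
  assumes a: "0 < a"
  shows "hom0 ls gg \<and> equivA ls R f (\<lambda>\<gamma> p. lincomb Spos cc (elem ls) \<gamma> p + D0 ls gg \<gamma> p)"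
  unfolding equivA_def
proof (intro conjI hom0_gg ballI)
  fix \<gamma> assume "\<gamma> \<in> arrows ls"
  then obtain i h where g: "\<gamma> = (i, h)" "i < len" "h < ls ! i" by (cases \<gamma>) (auto simp: arrows_iff)
  show "inI ls R (\<lambda>p. f \<gamma> p - (lincomb Spos cc (elem ls) \<gamma> p + D0 ls gg \<gamma> p))"
  proof (cases "a \<le> i")
    case True
    then show ?thesis using span_branch[OF finite_idx_pos idx_pos_good cov_pos True g(2,3)] g(1) by simp
  next
    case False
    then have "h = 0" using g ls_one by simp
    then show ?thesis using span_first[OF a, of i] False g(1) by simp
  qed
qed

lemma span_zero:
  assumes a: "a = 0"
  shows "hom0 ls gg \<and> equivA ls R f (\<lambda>\<gamma> p. lincomb Szero cc (elem ls) \<gamma> p + D0 ls gg \<gamma> p)"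
  unfolding equivA_def
proof (intro conjI hom0_gg ballI)
  fix \<gamma> assume "\<gamma> \<in> arrows ls"
  then obtain i h where g: "\<gamma> = (i, h)" "i < len" "h < ls ! i" by (cases \<gamma>) (auto simp: arrows_iff)
  have ai: "a \<le> i" using a by simp
  show "inI ls R (\<lambda>p. f \<gamma> p - (lincomb Szero cc (elem ls) \<gamma> p + D0 ls gg \<gamma> p))"
    using span_branch[OF finite_idx_zero idx_zero_good cov_zero[OF a] ai g(2,3)] g(1) by simp
qed

end


lemma basis_pos: "0 < a \<Longrightarrow> classes_basis ls R Spos (elem ls)"
  unfolding classes_basis_def
proof (intro conjI allI impI ballI)
  assume a: "0 < a"
  show "finite Spos" by (rule finite_idx_pos)
  fix j assume "j \<in> Spos" then show "kerD1 ls R (elem ls j)" using ker_elem idx_pos_good by blast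
next
  fix c g j assume a: "0 < a" and h: "hom0 ls g \<and> equivA ls R (lincomb Spos c (elem ls)) (D0 ls g)" and j: "j \<in> Spos"
  then show "c j = 0" using indep_pos[OF a] by blast
next
  fix f assume a: "0 < a" and kf: "kerD1 ls R f"
  show "\<exists>c g. hom0 ls g \<and> equivA ls R f (\<lambda>\<gamma> p. lincomb Spos c (elem ls) \<gamma> p + D0 ls g \<gamma> p)"
    using span_pos[OF kf a] by blast
qed

lemma basis_zero: "a = 0 \<Longrightarrow> classes_basis ls R Szero (elem ls)"
  unfolding classes_basis_def
proof (intro conjI allI impI ballI)
  show "finite Szero" by (rule finite_idx_zero)
  fix j assume "j \<in> Szero" then show "kerD1 ls R (elem ls j)" using ker_elem idx_zero_good by blast
next
  fix c g j assume a: "a = 0" and h: "hom0 ls g \<and> equivA ls R (lincomb Szero c (elem ls)) (D0 ls g)" and j: "j \<in> Szero"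
  then show "c j = 0" using indep_zero[OF a] by blast
next
  fix f assume a: "a = 0" and kf: "kerD1 ls R f"
  show "\<exists>c g. hom0 ls g \<and> equivA ls R f (\<lambda>\<gamma> p. lincomb Szero c (elem ls) \<gamma> p + D0 ls g \<gamma> p)"
    using span_zero[OF kf a] by blast
qed

end


theorem theorem3p5:
  fixes ls :: "nat list" and Mon :: "(nat \<times> nat \<times> nat) set" and nr :: nat
    and b :: "nat \<Rightarrow> nat \<Rightarrow> 'k::field_char_0" and kp :: "nat \<Rightarrow> nat"
    and a l m n :: nat
  assumes "toupie_pres ls Mon nr b kp a l m n"
  shows "(0 < a \<longrightarrow> classes_basis ls (rels ls Mon nr b) (idx_pos ls Mon nr b kp a) (elem ls))
       \<and> (a = 0 \<longrightarrow> classes_basis ls (rels ls Mon nr b) (idx_zero ls Mon nr b) (elem ls))"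
proof -
  interpret toupie ls Mon nr b kp a l m n by (rule toupie.intro[OF assms])
  show ?thesis using basis_pos basis_zero by blast
qed


end
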